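(* In the setting described in the context, $$\mathbb{E}_{i\in[m]}\sum_{t=1}^k\big\|\mathsf{P}_{Y_i}\mathsf{P}_{Z\Omega_{-i}|W,Y_i}-\mathsf{P}_{Y_i}\mathsf{P}_{Z\Omega_{-i}|W,Y_i^{-t}}\big\|\le 3k\sqrt{\delta}.$$
   Context: Let $G=(\mathcal{X},\mathcal{A},\mu,V)$ be a $k$-player game: $\mathcal{X}=\mathcal{X}^1\times\cdots\times\mathcal{X}^k$, $\mathcal{A}=\mathcal{A}^1\times\cdots\times\mathcal{A}^k$ finite, $\mu$ a distribution on $\mathcal{X}$, $V:\mathcal{X}\times\mathcal{A}\to\{0,1\}$. Assume $G$ is $\alpha$-anchored with anchor sets $\mathcal{X}^t_\perp\subseteq\mathcal{X}^t$: the marginal probability that $x^t\in\mathcal{X}^t_\perp$ is at least $\alpha$ for each $t$, and $\mu(x)=\mu(x|_{\overline{F}_x})\prod_{t\in F_x}\mu(x^t)$ for all $x$, where $F_x=\{t:x^t\in\mathcal{X}^t_\perp\}$, $\overline F_x=[k]\setminus F_x$ and $\mu(x|_S)$, $\mu(x^t)$ are marginals. Fix $n$, integers $1\le m<n$, $C=\{m+1,\dots,n\}$, and a deterministic strategy for $G^n$, i.e. functions $f^t:(\mathcal{X}^t)^n\to(\mathcal{A}^t)^n$. Let $X=(X_1,\dots,X_n)$, $X_i=(X_i^1,\dots,X_i^k)$, be distributed as $\mu^{\otimes n}$, let $(A_1^t,\dots,A_n^t)=f^t(X_1^t,\dots,X_n^t)$, $A_i=(A_i^1,\dots,A_i^k)$,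 and $Z=(A_j)_{j\in C}$. Let $W$ be the event that $V(X_j,A_j)=1$ for all $j\in C$, assume $\Pr(W)>0$, and set $\delta=\frac{|C|\log|\mathcal{A}|+\log(1/\Pr(W))}{m}$. For each $i,t$ let $Y_i^t=X_i^t$ if $X_i^t\notin\mathcal{X}^t_\perp$ and $Y_i^t=\perp$ otherwise; $Y_i=(Y_i^1,\dots,Y_i^k)$; $Y_i^{-t}$ is $Y_i$ with coordinate $t$ omitted. For $i\in[m]$ let $D_i$ be a uniformly random subset of $[k]$ of size $k-1$, independent of each other and of $X$; $M_i=(Y_i^t)_{t\in D_i}$ and $\Omega_i=(D_i,M_i)$; for $j\in C$, $\Omega_j=X_j$. $\Omega_{-i}$ is $(\Omega_1,\dots,\Omega_n)$ with $\Omega_i$ omitted. Notation: $\mathsf{P}_{Y_i}\mathsf{P}_{Z\Omega_{-i}|W,Y_i}$ is the distribution $(y,z,\omega)\mapsto\mathsf{P}_{Y_i}(y)\mathsf{P}_{Z\Omega_{-i}|W,Y_i=y}(z,\omega)$, and $\mathsf{P}_{Y_i}\mathsf{P}_{Z\Omega_{-i}|W,Y_i^{-t}}$ is $(y,z,\omega)\mapsto\mathsf{P}_{Y_i}(y)\mathsf{P}_{Z\Omega_{-i}|W,Y_i^{-t}=y^{-t}}(z,\omega)$. $\|\cdot\|$ is total variation distance; $\mathbb{E}_{i\in[m]}$ is the uniform average. *)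

theory Defs
  imports "HOL-Probability.Probability"
begin

text \<open>Conventions: players are indexed by t in {0..<k}, rounds by i in {0..<n}
 (0-based).  The paper's [m] is {0..<m} and C = {m+1..n} is {m..<n}.\<close>

abbreviation prb :: "'w pmf \<Rightarrow> 'w set \<Rightarrow> real" where
  "prb P A \<equiv> measure_pmf.prob P A"

definition game :: "nat \<Rightarrow> (nat \<Rightarrow> 'q set) \<Rightarrow> (nat \<Rightarrow> 'a set) \<Rightarrow> 'q list pmf \<Rightarrow> bool" where
  "game k Xs As mu \<longleftrightarrow>
     (\<forall>t<k. finite (Xs t) \<and> finite (As t)) \<and>
     set_pmf mu \<subseteq> {x. length x = k \<and> (\<forall>t<k. x ! t \<in> Xs t)}"

definition marg :: "'q list pmf \<Rightarrow> nat set \<Rightarrow> 'q list \<Rightarrow> real" where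
  "marg mu S x = prb mu {y. \<forall>t\<in>S. y ! t = x ! t}"

definition Fset :: "nat \<Rightarrow> (nat \<Rightarrow> 'q set) \<Rightarrow> 'q list \<Rightarrow> nat set" where
  "Fset k Xb x = {t. t < k \<and> x ! t \<in> Xb t}"

definition anchored ::
  "nat \<Rightarrow> (nat \<Rightarrow> 'q set) \<Rightarrow> 'q list pmf \<Rightarrow> real \<Rightarrow> (nat \<Rightarrow> 'q set) \<Rightarrow> bool" where
  "anchored k Xs mu \<alpha> Xb \<longleftrightarrow>
     (\<forall>t<k. Xb t \<subseteq> Xs t \<and> prb mu {x. x ! t \<in> Xb t} \<ge> \<alpha>) \<and>
     (\<forall>x. length x = k \<and> (\<forall>t<k. x ! t \<in> Xs t) \<longrightarrow>
        pmf mu x = marg mu ({0..<k} - Fset k Xb x) x * (\<Prod>t\<in>Fset k Xb x. marg mu {t} x))"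

definition strategy ::
  "nat \<Rightarrow> nat \<Rightarrow> (nat \<Rightarrow> 'q set) \<Rightarrow> (nat \<Rightarrow> 'a set) \<Rightarrow> (nat \<Rightarrow> 'q list \<Rightarrow> 'a list) \<Rightarrow> bool" where
  "strategy k n Xs As f \<longleftrightarrow>
     (\<forall>t<k. \<forall>qs. length qs = n \<and> set qs \<subseteq> Xs t \<longrightarrow>
        length (f t qs) = n \<and> set (f t qs) \<subseteq> As t)"

definition sample :: "nat \<Rightarrow> nat \<Rightarrow> nat \<Rightarrow> 'q list pmf \<Rightarrow> ((nat \<Rightarrow> 'q list) \<times> (nat \<Rightarrow> nat set)) pmf" where
  "sample k n m mu = pair_pmf (Pi_pmf {0..<n} [] (\<lambda>_. mu))
      (Pi_pmf {0..<m} {} (\<lambda>_. pmf_of_set {S. S \<subseteq> {0..<k} \<and> card S = k - 1}))"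

definition ansv :: "nat \<Rightarrow> nat \<Rightarrow> (nat \<Rightarrow> 'q list \<Rightarrow> 'a list) \<Rightarrow> (nat \<Rightarrow> 'q list) \<Rightarrow> nat \<Rightarrow> 'a list" where
  "ansv k n f X i = map (\<lambda>t. f t (map (\<lambda>j. X j ! t) [0..<n]) ! i) [0..<k]"

definition Zv :: "nat \<Rightarrow> nat \<Rightarrow> nat \<Rightarrow> (nat \<Rightarrow> 'q list \<Rightarrow> 'a list) \<Rightarrow> (nat \<Rightarrow> 'q list) \<Rightarrow> 'a list list" where
  "Zv k m n f X = map (ansv k n f X) [m..<n]"

definition Wev :: "nat \<Rightarrow> nat \<Rightarrow> nat \<Rightarrow> (nat \<Rightarrow> 'q list \<Rightarrow> 'a list) \<Rightarrow> ('q list \<Rightarrow> 'a list \<Rightarrow> bool)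
     \<Rightarrow> ((nat \<Rightarrow> 'q list) \<times> (nat \<Rightarrow> nat set)) set" where
  "Wev k m n f V = {\<omega>. \<forall>j\<in>{m..<n}. V (fst \<omega> j) (ansv k n f (fst \<omega>) j)}"

text \<open>Y_i, with None playing the role of the symbol perp.\<close>
definition Yv :: "nat \<Rightarrow> (nat \<Rightarrow> 'q set) \<Rightarrow> (nat \<Rightarrow> 'q list) \<Rightarrow> nat \<Rightarrow> 'q option list" where
  "Yv k Xb X i = map (\<lambda>t. if X i ! t \<in> Xb t then None else Some (X i ! t)) [0..<k]"

definition omit :: "nat \<Rightarrow> 'b list \<Rightarrow> 'b list" where
  "omit t ys = take t ys @ drop (Suc t) ys"

text \<open>Omega_j: (D_j, M_j) for j < m (M_j = (Y_j^t)_{t in D_j}), X_j for j in C.\<close>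
definition Om :: "nat \<Rightarrow> nat \<Rightarrow> (nat \<Rightarrow> 'q set) \<Rightarrow> (nat \<Rightarrow> 'q list) \<Rightarrow> (nat \<Rightarrow> nat set) \<Rightarrow> nat
     \<Rightarrow> (nat set \<times> (nat \<Rightarrow> 'q option option)) + 'q list" where
  "Om k m Xb X D j = (if j < m
      then Inl (D j, (\<lambda>t. if t \<in> D j then Some (Yv k Xb X j ! t) else None))
      else Inr (X j))"

definition Om_minus :: "nat \<Rightarrow> nat \<Rightarrow> nat \<Rightarrow> (nat \<Rightarrow> 'q set) \<Rightarrow> (nat \<Rightarrow> 'q list) \<Rightarrow> (nat \<Rightarrow> nat set) \<Rightarrow> nat
     \<Rightarrow> ((nat set \<times> (nat \<Rightarrow> 'q option option)) + 'q list) list" where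
  "Om_minus k m n Xb X D i = map (Om k m Xb X D) (filter (\<lambda>j. j \<noteq> i) [0..<n])"

text \<open>The (sub)distribution (y, r) \<mapsto> P_Y(y) * P_{R | W, g(Y) = g(y)}(r).
 Conditional probabilities with a null conditioning event are 0 (x / 0 = 0).\<close>
definition PYcond :: "'w pmf \<Rightarrow> ('w \<Rightarrow> 'y) \<Rightarrow> ('w \<Rightarrow> 'r) \<Rightarrow> 'w set \<Rightarrow> ('y \<Rightarrow> 'g) \<Rightarrow> 'y \<Rightarrow> 'r \<Rightarrow> real" where
  "PYcond P Y R W g y r =
     prb P {\<omega>. Y \<omega> = y} *
     (prb P {\<omega>. R \<omega> = r \<and> \<omega> \<in> W \<and> g (Y \<omega>) = g y} / prb P {\<omega>. \<omega> \<in> W \<and> g (Y \<omega>) = g y})"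

definition tvd :: "('y \<Rightarrow> 'r \<Rightarrow> real) \<Rightarrow> ('y \<Rightarrow> 'r \<Rightarrow> real) \<Rightarrow> real" where
  "tvd p q = (\<Sum>\<^sub>\<infinity>(y, r)\<in>UNIV. \<bar>p y r - q y r\<bar>) / 2"

end

theory Submission
  imports Defs
begin


lemma h_mono:
  fixes a b :: real assumes "0 < a" "a \<le> b"
  shows "(a+1)*ln a - 2*(a-1) \<le> (b+1)*ln b - 2*(b-1)"
proof (rule DERIV_nonneg_imp_nondecreasing[OF assms(2)])
  fix x assume x: "a \<le> x" "x \<le> b"
  hence xp: "x > 0" using assms by linarith
  show "\<exists>y. ((\<lambda>x. (x+1)*ln x - 2*(x-1)) has_real_derivative y) (at x) \<and> 0 \<le> y"
  proof (intro exI conjI)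
    show "((\<lambda>x. (x+1)*ln x - 2*(x-1)) has_real_derivative (ln x + (x+1)/x - 2)) (at x)"
      using xp by (auto intro!: derivative_eq_intros simp: field_simps)
    have "ln (1/x) \<le> 1/x - 1" using ln_le_minus_one[of "1/x"] xp by simp
    hence "- ln x \<le> 1/x - 1" using xp by (simp add: ln_div)
    moreover have "(x+1)/x = 1 + 1/x" using xp by (simp add: field_simps)
    ultimately show "0 \<le> ln x + (x+1)/x - 2" by linarith
  qed
qed

lemma pinsker_pt:
  fixes x :: real assumes "x > 0"
  shows "3*(x-1)^2 \<le> 2*(x+2)*(x*ln x - x + 1)"
proof -
  define g where "g = (\<lambda>x::real. 2*(x+2)*(x*ln x - x + 1) - 3*(x-1)^2)"
  have der: "(g has_real_derivative 4*((x+1)*ln x - 2*(x-1))) (at x)" if "x > 0" for x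
    unfolding g_def using that
    by (auto intro!: derivative_eq_intros simp: field_simps power2_eq_square)
  have g1: "g 1 = 0" by (simp add: g_def)
  have "g x \<ge> 0"
  proof (cases "x \<le> 1")
    case True
    have "g 1 \<le> g x"
    proof (rule DERIV_nonpos_imp_nonincreasing[of x 1 g, OF True])
      fix y assume y: "x \<le> y" "y \<le> 1"
      hence yp: "y > 0" using assms by linarith
      have "(y+1)*ln y - 2*(y-1) \<le> (1+1)*ln 1 - 2*(1-1)" using h_mono[OF yp y(2)] .
      thus "\<exists>d. (g has_real_derivative d) (at y) \<and> d \<le> 0"
        using der[OF yp] by (intro exI[of _ "4*((y+1)*ln y - 2*(y-1))"]) auto
    qed
    thus ?thesis using g1 by simp
  next
    case False
    have "g 1 \<le> g x"
    proof (rule DERIV_nonneg_imp_nondecreasing[of 1 x g])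
      show "1 \<le> x" using False by simp
      fix y assume y: "1 \<le> y" "y \<le> x"
      hence yp: "y > 0" by linarith
      have "(1+1)*ln 1 - 2*(1-1) \<le> (y+1)*ln y - 2*(y-1)" using h_mono[of 1 y] y by simp
      thus "\<exists>d. (g has_real_derivative d) (at y) \<and> 0 \<le> d"
        using der[OF yp] by (intro exI[of _ "4*((y+1)*ln y - 2*(y-1))"]) auto
    qed
    thus ?thesis using g1 by simp
  qed
  thus ?thesis by (simp add: g_def)
qed

lemma pinsker_pq:
  fixes p q :: real assumes "p \<ge> 0" "q > 0"
  shows "3*(p-q)^2 \<le> 2*(p+2*q)*(p*ln(p/q) - p + q)"
proof (cases "p = 0")
  case True thus ?thesis using assms by (simp add: power2_eq_square)
next
  case False
  hence pp: "p > 0" using assms by simp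
  have "3*(p/q-1)^2 \<le> 2*(p/q+2)*(p/q*ln (p/q) - p/q + 1)"
    using pinsker_pt[of "p/q"] pp assms by simp
  hence "q^2 * (3*(p/q-1)^2) \<le> q^2 * (2*(p/q+2)*(p/q*ln (p/q) - p/q + 1))"
    by (intro mult_left_mono) auto
  moreover have "q^2 * (3*(p/q-1)^2) = 3*(p-q)^2" using assms
    by (simp add: field_simps power2_eq_square)
  moreover have "q^2 * (2*(p/q+2)*(p/q*ln (p/q) - p/q + 1)) = 2*(p+2*q)*(p*ln(p/q) - p + q)"
    using assms by (simp add: field_simps power2_eq_square)
  ultimately show ?thesis by simp
qed

lemma jensen_ln:
  fixes q a :: "'w \<Rightarrow> real"
  assumes S: "finite S" and q0: "\<And>w. w \<in> S \<Longrightarrow> q w \<ge> 0" and q1: "(\<Sum>w\<in>S. q w) = 1"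
    and ap: "\<And>w. w \<in> S \<Longrightarrow> q w > 0 \<Longrightarrow> a w > 0"
  shows "(\<Sum>w\<in>S. q w * ln (a w)) \<le> ln (\<Sum>w\<in>S. q w * a w)"
proof -
  define M where "M = (\<Sum>w\<in>S. q w * a w)"
  have nn: "q w * a w \<ge> 0" if "w \<in> S" for w
    using q0[OF that] ap[OF that] by (cases "q w = 0") (auto intro!: mult_nonneg_nonneg less_imp_le)
  obtain w0 where w0: "w0 \<in> S" "q w0 > 0"
  proof -
    have "\<exists>w\<in>S. q w \<noteq> 0" using q1 by (metis sum.neutral zero_neq_one)
    thus ?thesis using q0 that by (auto simp: less_le)
  qed
  have "M \<ge> q w0 * a w0" unfolding M_def
    using member_le_sum[of w0 S "\<lambda>w. q w * a w"] nn w0 S by auto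
  moreover have "q w0 * a w0 > 0" using w0 ap by auto
  ultimately have Mp: "M > 0" by linarith
  have "q w * ln (a w) \<le> q w * (ln M + a w / M - 1)" if "w \<in> S" for w
  proof (cases "q w = 0")
    case True thus ?thesis by simp
  next
    case False
    hence qp: "q w > 0" using q0 that by (simp add: less_le)
    have apw: "a w > 0" using ap that qp by auto
    have "ln (a w / M) \<le> a w / M - 1" using ln_le_minus_one apw Mp by simp
    hence "ln (a w) \<le> ln M + a w / M - 1" using apw Mp by (simp add: ln_div)
    thus ?thesis using qp by (intro mult_left_mono) auto
  qed
  hence "(\<Sum>w\<in>S. q w * ln (a w)) \<le> (\<Sum>w\<in>S. q w * (ln M + a w / M - 1))" by (rule sum_mono)
  also have "\<dots> = ln M * (\<Sum>w\<in>S. q w) + (\<Sum>w\<in>S. q w * a w) / M - (\<Sum>w\<in>S. q w)"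
    by (simp add: algebra_simps sum.distrib sum_subtractf sum_distrib_left sum_divide_distrib)
  also have "\<dots> = ln M" using q1 Mp by (simp add: M_def)
  finally show ?thesis by (simp add: M_def)
qed

lemma pinsker:
  fixes p q :: "'v \<Rightarrow> real"
  assumes T: "finite T" and p0: "\<And>v. v \<in> T \<Longrightarrow> p v \<ge> 0" and q0: "\<And>v. v \<in> T \<Longrightarrow> q v \<ge> 0"
    and p1: "(\<Sum>v\<in>T. p v) = 1" and q1: "(\<Sum>v\<in>T. q v) \<le> 1"
    and pq: "\<And>v. v \<in> T \<Longrightarrow> p v > 0 \<Longrightarrow> q v > 0"
  shows "(\<Sum>v\<in>T. \<bar>p v - q v\<bar>)^2 \<le> 2 * (\<Sum>v\<in>T. p v * ln (p v / q v))"
proof -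
  define a where "a v = sqrt (p v + 2 * q v)" for v
  define b where "b v = (if p v + 2 * q v = 0 then 0 else \<bar>p v - q v\<bar> / sqrt (p v + 2 * q v))" for v
  have ab: "\<bar>p v - q v\<bar> = a v * b v" if "v \<in> T" for v
  proof (cases "p v + 2 * q v = 0")
    case True
    hence "p v = 0" "q v = 0" using p0[OF that] q0[OF that] by linarith+
    thus ?thesis by (simp add: a_def b_def)
  next
    case False
    hence "p v + 2 * q v > 0" using p0[OF that] q0[OF that] by linarith
    thus ?thesis by (simp add: a_def b_def)
  qed
  have b2: "(b v)^2 \<le> (2/3) * (p v * ln (p v / q v) - p v + q v)" if "v \<in> T" for v
  proof (cases "q v = 0")
    case True
    hence "p v = 0" using pq[OF that] p0[OF that] by (auto simp: less_le)
    thus ?thesis using True by (simp add: b_def)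
  next
    case False
    hence qp: "q v > 0" using q0[OF that] by (simp add: less_le)
    have s: "p v + 2 * q v > 0" using p0[OF that] qp by linarith
    have "(b v)^2 = (p v - q v)^2 / (p v + 2 * q v)" using s
      by (simp add: b_def power_divide)
    also have "\<dots> \<le> (2/3) * (p v * ln (p v / q v) - p v + q v)"
    proof -
      have "3*(p v - q v)^2 \<le> 2*(p v + 2 * q v)*(p v * ln (p v / q v) - p v + q v)"
        using pinsker_pq[OF p0[OF that] qp] .
      moreover have "2*(p v + 2 * q v)*(p v * ln (p v / q v) - p v + q v) = 3 * ((2/3) * (p v * ln (p v / q v) - p v + q v) * (p v + 2 * q v))"
        by (simp add: field_simps)
      ultimately have "(p v - q v)^2 \<le> (2/3) * (p v * ln (p v / q v) - p v + q v) * (p v + 2 * q v)"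
        by linarith
      thus ?thesis using s by (simp add: pos_divide_le_eq)
    qed
    finally show ?thesis .
  qed
  have "(\<Sum>v\<in>T. \<bar>p v - q v\<bar>)^2 = (\<Sum>v\<in>T. a v * b v)^2" using ab by simp
  also have "\<dots> \<le> (\<Sum>v\<in>T. (a v)^2) * (\<Sum>v\<in>T. (b v)^2)" by (rule Cauchy_Schwarz_ineq_sum)
  also have "(\<Sum>v\<in>T. (a v)^2) = (\<Sum>v\<in>T. p v) + 2 * (\<Sum>v\<in>T. q v)"
    using p0 q0 by (simp add: a_def sum.distrib sum_distrib_left)
  also have "\<dots> \<le> 3" using p1 q1 by simp
  also have "(\<Sum>v\<in>T. (b v)^2) \<le> (\<Sum>v\<in>T. (2/3) * (p v * ln (p v / q v) - p v + q v))"
    using b2 by (rule sum_mono)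
  also have "\<dots> = (2/3) * (\<Sum>v\<in>T. (p v * ln (p v / q v) - p v + q v))"
    by (rule sum_distrib_left[symmetric])
  also have "(\<Sum>v\<in>T. (p v * ln (p v / q v) - p v + q v)) = (\<Sum>v\<in>T. p v * ln (p v / q v)) - (\<Sum>v\<in>T. p v) + (\<Sum>v\<in>T. q v)"
    by (simp add: sum.distrib sum_subtractf)
  finally have "(\<Sum>v\<in>T. \<bar>p v - q v\<bar>)^2 \<le> 3 * ((2/3) * ((\<Sum>v\<in>T. p v * ln (p v / q v)) - (\<Sum>v\<in>T. p v) + (\<Sum>v\<in>T. q v)))"
    by (smt (verit, ccfv_threshold) mult_right_mono sum_nonneg zero_le_power2)
  thus ?thesis using p1 q1 by simp
qed


definition qW :: "'w pmf \<Rightarrow> 'w set \<Rightarrow> 'w \<Rightarrow> real" where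
  "qW P W w = (if w \<in> W then pmf P w / prb P W else 0)"

definition Qev :: "'w pmf \<Rightarrow> 'w set \<Rightarrow> 'w set \<Rightarrow> real" where
  "Qev P W A = prb P (A \<inter> W) / prb P W"

lemma prb_sum:
  assumes "finite (set_pmf P)"
  shows "prb P A = (\<Sum>w\<in>set_pmf P. if w \<in> A then pmf P w else 0)"
proof -
  have "prb P A = prb P (A \<inter> set_pmf P)" by (simp add: measure_Int_set_pmf)
  also have "\<dots> = sum (pmf P) (A \<inter> set_pmf P)"
    using assms by (intro measure_measure_pmf_finite) auto
  also have "\<dots> = (\<Sum>w\<in>set_pmf P. if w \<in> A then pmf P w else 0)"
    using assms by (subst Int_commute) (rule sum.inter_restrict)
  finally show ?thesis .
qed

lemma prb_le_mono: "A \<subseteq> B \<Longrightarrow> prb P A \<le> prb P B"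
  by (simp add: measure_pmf.finite_measure_mono)

lemma qW_nonneg: "qW P W w \<ge> 0"
  by (simp add: qW_def)

lemma qW_sum:
  assumes "finite (set_pmf P)"
  shows "(\<Sum>w\<in>set_pmf P. qW P W w * (if w \<in> A then 1 else 0)) = Qev P W A"
proof -
  have "(\<Sum>w\<in>set_pmf P. qW P W w * (if w \<in> A then 1 else 0))
      = (\<Sum>w\<in>set_pmf P. (if w \<in> A \<inter> W then pmf P w else 0)) / prb P W"
    by (auto simp add: sum_divide_distrib qW_def intro!: sum.cong)
  thus ?thesis using prb_sum[OF assms, of "A \<inter> W"] by (simp add: Qev_def)
qed

lemma qW_sum1:
  assumes "finite (set_pmf P)" "prb P W > 0"
  shows "(\<Sum>w\<in>set_pmf P. qW P W w) = 1"
proof -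
  have "(\<Sum>w\<in>set_pmf P. qW P W w) = (\<Sum>w\<in>set_pmf P. qW P W w * (if w \<in> UNIV then 1 else 0))"
    by simp
  also have "\<dots> = Qev P W UNIV" by (rule qW_sum[OF assms(1)])
  also have "\<dots> = 1" using assms by (simp add: Qev_def)
  finally show ?thesis .
qed

lemma group_q:
  assumes "finite (set_pmf P)"
  shows "(\<Sum>w\<in>set_pmf P. qW P W w * F (V w)) = (\<Sum>v\<in>V ` set_pmf P. Qev P W {w. V w = v} * F v)"
proof -
  have "(\<Sum>w\<in>set_pmf P. qW P W w * F (V w))
      = (\<Sum>v\<in>V ` set_pmf P. \<Sum>w\<in>{w \<in> set_pmf P. V w = v}. qW P W w * F (V w))"
    using assms by (rule sum.image_gen)
  also have "\<dots> = (\<Sum>v\<in>V ` set_pmf P. Qev P W {w. V w = v} * F v)"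
  proof (rule sum.cong[OF refl])
    fix v
    have "(\<Sum>w\<in>{w \<in> set_pmf P. V w = v}. qW P W w * F (V w))
        = (\<Sum>w\<in>set_pmf P. qW P W w * (if w \<in> {w. V w = v} then 1 else 0)) * F v"
      using assms by (simp add: sum_distrib_right sum.inter_filter[symmetric] if_distrib cong: if_cong)
    thus "(\<Sum>w\<in>{w \<in> set_pmf P. V w = v}. qW P W w * F (V w)) = Qev P W {w. V w = v} * F v"
      using qW_sum[OF assms, of W "{w. V w = v}"] by simp
  qed
  finally show ?thesis .
qed

lemma partition_sum:
  assumes "finite (set_pmf P)" "finite Vs" "V ` set_pmf P \<subseteq> Vs"
  shows "(\<Sum>v\<in>Vs. prb P {w. V w = v \<and> w \<in> E}) = prb P E"
proof -
  have "(\<Sum>v\<in>Vs. prb P {w. V w = v \<and> w \<in> E})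
      = (\<Sum>v\<in>Vs. \<Sum>w\<in>set_pmf P. if V w = v \<and> w \<in> E then pmf P w else 0)"
    using prb_sum[OF assms(1)] by simp
  also have "\<dots> = (\<Sum>w\<in>set_pmf P. \<Sum>v\<in>Vs. if V w = v \<and> w \<in> E then pmf P w else 0)"
    by (rule sum.swap)
  also have "\<dots> = (\<Sum>w\<in>set_pmf P. if w \<in> E then pmf P w else 0)"
  proof (rule sum.cong[OF refl])
    fix w assume w: "w \<in> set_pmf P"
    have "V w \<in> Vs" using w assms(3) by auto
    thus "(\<Sum>v\<in>Vs. if V w = v \<and> w \<in> E then pmf P w else 0) = (if w \<in> E then pmf P w else 0)"
      using assms(2) by (auto simp: sum.delta)
  qed
  also have "\<dots> = prb P E" using prb_sum[OF assms(1)] by simp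
  finally show ?thesis .
qed

lemma partition_sum_le:
  assumes "finite (set_pmf P)" "finite Vs"
  shows "(\<Sum>v\<in>Vs. prb P {w. V w = v \<and> w \<in> E}) \<le> prb P E"
proof -
  have "(\<Sum>v\<in>Vs. prb P {w. V w = v \<and> w \<in> E}) \<le> (\<Sum>v\<in>Vs \<union> V ` set_pmf P. prb P {w. V w = v \<and> w \<in> E})"
    using assms by (intro sum_mono2) auto
  also have "\<dots> = prb P E" using assms by (intro partition_sum) auto
  finally show ?thesis .
qed


lemma Qev_pos:
  assumes "w \<in> set_pmf P" "w \<in> A" "w \<in> W" "prb P W > 0"
  shows "Qev P W A > 0"
  using assms measure_pmf_posI[of w P "A \<inter> W"] by (simp add: Qev_def)

lemma Qev_nonneg: "Qev P W A \<ge> 0"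
  by (simp add: Qev_def)

lemma prb_pos: "w \<in> set_pmf P \<Longrightarrow> w \<in> A \<Longrightarrow> prb P A > 0"
  by (rule measure_pmf_posI)

lemma partition_Qev:
  assumes "finite (set_pmf P)" "finite Vs" "V ` set_pmf P \<subseteq> Vs"
  shows "(\<Sum>v\<in>Vs. Qev P W {w. V w = v \<and> w \<in> E}) = Qev P W E"
proof -
  have "(\<Sum>v\<in>Vs. Qev P W {w. V w = v \<and> w \<in> E}) = (\<Sum>v\<in>Vs. prb P {w. V w = v \<and> w \<in> E \<inter> W}) / prb P W"
    by (simp add: Qev_def sum_divide_distrib Int_def conj_assoc)
  also have "\<dots> = Qev P W E" using partition_sum[OF assms, of "E \<inter> W"] by (simp add: Qev_def)
  finally show ?thesis .
qed

lemma raz: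
  fixes P :: "'w pmf" and W :: "'w set" and I :: "'i set"
    and X :: "'i \<Rightarrow> 'w \<Rightarrow> 'x" and Gm :: "'i \<Rightarrow> 'w \<Rightarrow> 'g" and G :: "'w \<Rightarrow> 'gg" and Z :: "'w \<Rightarrow> 'z"
  assumes fin: "finite (set_pmf P)" and finI: "finite I" and pW: "prb P W > 0"
    and N: "real (card (Z ` (set_pmf P \<inter> W))) \<le> N"
    and Gdet: "\<And>i w w'. i \<in> I \<Longrightarrow> G w = G w' \<Longrightarrow> Gm i w = Gm i w'"
    and CI: "\<And>w. w \<in> set_pmf P \<Longrightarrow> prb P {w'. (\<forall>i\<in>I. X i w' = X i w) \<and> G w' = G w}
         = prb P {w'. G w' = G w} * (\<Prod>i\<in>I. prb P {w'. X i w' = X i w \<and> Gm i w' = Gm i w} / prb P {w'. Gm i w' = Gm i w})"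
  shows "(\<Sum>i\<in>I. \<Sum>w\<in>set_pmf P. qW P W w * ln (Qev P W {w'. X i w' = X i w \<and> G w' = G w \<and> Z w' = Z w}
          / (prb P {w'. X i w' = X i w \<and> Gm i w' = Gm i w} / prb P {w'. Gm i w' = Gm i w} * Qev P W {w'. G w' = G w \<and> Z w' = Z w})))
       \<le> ln (N / prb P W)"
proof -
  define S where "S = set_pmf P"
  define pw where "pw = prb P W"
  define a where "a i w = Qev P W {w'. X i w' = X i w \<and> G w' = G w \<and> Z w' = Z w}" for i w
  define b where "b w = Qev P W {w'. G w' = G w \<and> Z w' = Z w}" for w
  define c where "c i w = prb P {w'. X i w' = X i w \<and> Gm i w' = Gm i w} / prb P {w'. Gm i w' = Gm i w}" for i w
  define e where "e w = Qev P W {w'. (\<forall>i\<in>I. X i w' = X i w) \<and> G w' = G w \<and> Z w' = Z w}" for w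
  define g where "g w = prb P {w'. G w' = G w}" for w
  define A where "A w = b w * (\<Prod>i\<in>I. a i w / b w) / e w" for w
  define B where "B w = e w / (b w * (\<Prod>i\<in>I. c i w))" for w
  define q where "q = qW P W"
  have finS: "finite S" using fin by (simp add: S_def)
  have pwp: "pw > 0" using pW by (simp add: pw_def)
  have apos: "a i w > 0" and bpos: "b w > 0" and cpos: "c i w > 0" and epos: "e w > 0" and gpos: "g w > 0"
    if "w \<in> S" "w \<in> W" for i w
    using that pW by (auto simp: a_def b_def c_def e_def g_def S_def intro!: Qev_pos prb_pos divide_pos_pos)
  have Apos: "A w > 0" and Bpos: "B w > 0" if "w \<in> S" "w \<in> W" for w
    using that apos bpos cpos epos by (auto simp: A_def B_def intro!: prod_pos divide_pos_pos mult_pos_pos)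
  have q0: "q w \<ge> 0" for w by (simp add: q_def qW_nonneg)
  have q1: "(\<Sum>w\<in>S. q w) = 1" using qW_sum1[OF fin pW] by (simp add: q_def S_def)
  have qW': "w \<in> W" if "q w > 0" for w using that by (auto simp: q_def qW_def split: if_splits)
  have key: "(\<Sum>i\<in>I. ln (a i w / (c i w * b w))) = ln (A w) + ln (B w)" if w: "w \<in> S" "w \<in> W" for w
  proof -
    have "(\<Sum>i\<in>I. ln (a i w / (c i w * b w))) = ln (\<Prod>i\<in>I. a i w / (c i w * b w))"
    proof (subst ln_prod)
      show "\<And>i. i \<in> I \<Longrightarrow> a i w / (c i w * b w) \<noteq> 0"
        using apos[OF w] bpos[OF w] cpos[OF w] by (metis divide_eq_0_iff less_irrefl mult_eq_0_iff)
    qed (use finI in auto)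
    also have "(\<Prod>i\<in>I. a i w / (c i w * b w)) = (\<Prod>i\<in>I. (a i w / b w) / c i w)"
      by (intro prod.cong) (auto simp: field_simps)
    also have "\<dots> = (\<Prod>i\<in>I. a i w / b w) / (\<Prod>i\<in>I. c i w)" by (rule prod_dividef)
    also have "\<dots> = A w * B w" using bpos[OF w] epos[OF w] by (simp add: A_def B_def field_simps)
    also have "ln (A w * B w) = ln (A w) + ln (B w)" using Apos[OF w] Bpos[OF w] by (simp add: ln_mult)
    finally show ?thesis .
  qed
  have LHS: "(\<Sum>i\<in>I. \<Sum>w\<in>S. q w * ln (a i w / (c i w * b w))) = (\<Sum>w\<in>S. q w * ln (A w)) + (\<Sum>w\<in>S. q w * ln (B w))"
  proof -
    have "(\<Sum>i\<in>I. \<Sum>w\<in>S. q w * ln (a i w / (c i w * b w))) = (\<Sum>w\<in>S. q w * (\<Sum>i\<in>I. ln (a i w / (c i w * b w))))"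
      by (subst sum.swap) (simp add: sum_distrib_left)
    also have "\<dots> = (\<Sum>w\<in>S. q w * (ln (A w) + ln (B w)))"
    proof (rule sum.cong[OF refl])
      fix w assume w: "w \<in> S"
      show "q w * (\<Sum>i\<in>I. ln (a i w / (c i w * b w))) = q w * (ln (A w) + ln (B w))"
        using key[OF w] by (cases "w \<in> W") (auto simp: q_def qW_def)
    qed
    also have "\<dots> = (\<Sum>w\<in>S. q w * ln (A w)) + (\<Sum>w\<in>S. q w * ln (B w))"
      by (simp add: algebra_simps sum.distrib)
    finally show ?thesis .
  qed
  have partA: "(\<Sum>w\<in>S. q w * ln (A w)) \<le> 0"
  proof -
    have J: "(\<Sum>w\<in>S. q w * ln (A w)) \<le> ln (\<Sum>w\<in>S. q w * A w)"
      using jensen_ln[OF finS, of q A] q0 q1 qW' Apos by auto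
    define V where "V w = (restrict (\<lambda>i. X i w) I, (G w, Z w))" for w
    define aa where "aa i x0 u = Qev P W {w'. X i w' = x0 \<and> (G w', Z w') = u}" for i x0 u
    define bb where "bb u = Qev P W {w'. (G w', Z w') = u}" for u
    define ee where "ee x u = Qev P W {w'. V w' = (x, u)}" for x u
    define \<Phi> where "\<Phi> v = bb (snd v) * (\<Prod>i\<in>I. aa i (fst v i) (snd v) / bb (snd v)) / ee (fst v) (snd v)" for v
    define \<Psi> where "\<Psi> v = bb (snd v) * (\<Prod>i\<in>I. aa i (fst v i) (snd v) / bb (snd v))" for v
    have AV: "A w = \<Phi> (V w)" for w
    proof -
      have "ee (restrict (\<lambda>i. X i w) I) (G w, Z w) = e w"
        unfolding ee_def e_def V_def by (rule arg_cong[where f="Qev P W"]) (auto simp: restrict_def fun_eq_iff)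
      moreover have "(\<Prod>i\<in>I. aa i (restrict (\<lambda>i. X i w) I i) (G w, Z w) / bb (G w, Z w)) = (\<Prod>i\<in>I. a i w / b w)"
        by (intro prod.cong) (auto simp: aa_def bb_def a_def b_def)
      moreover have "bb (G w, Z w) = b w" by (simp add: bb_def b_def)
      ultimately show ?thesis by (simp add: A_def \<Phi>_def V_def)
    qed
    have bb0: "bb u \<ge> 0" for u by (simp add: bb_def Qev_nonneg)
    have aa0: "aa i x u \<ge> 0" for i x u by (simp add: aa_def Qev_nonneg)
    have \<Psi>0: "\<Psi> v \<ge> 0" for v unfolding \<Psi>_def by (intro mult_nonneg_nonneg prod_nonneg divide_nonneg_nonneg ballI bb0 aa0)
    have "(\<Sum>w\<in>S. q w * A w) = (\<Sum>v\<in>V ` S. Qev P W {w. V w = v} * \<Phi> v)"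
      unfolding AV q_def S_def by (rule group_q[OF fin])
    also have "\<dots> \<le> (\<Sum>v\<in>V ` S. \<Psi> v)"
    proof (rule sum_mono)
      fix v :: "('i \<Rightarrow> 'x) \<times> 'gg \<times> 'z"
      have "Qev P W {w. V w = v} = ee (fst v) (snd v)" by (simp add: ee_def)
      thus "Qev P W {w. V w = v} * \<Phi> v \<le> \<Psi> v"
        using \<Psi>0[of v] by (cases "ee (fst v) (snd v) = 0") (auto simp: \<Phi>_def \<Psi>_def)
    qed
    also have "\<dots> \<le> (\<Sum>v\<in>(PiE I (\<lambda>i. X i ` S)) \<times> ((\<lambda>w. (G w, Z w)) ` S). \<Psi> v)"
      using finS finI \<Psi>0 by (intro sum_mono2) (auto simp: V_def finite_PiE)
    also have "\<dots> = (\<Sum>x\<in>PiE I (\<lambda>i. X i ` S). \<Sum>u\<in>(\<lambda>w. (G w, Z w)) ` S. \<Psi> (x, u))"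
      by (simp add: sum.cartesian_product)
    also have "\<dots> = (\<Sum>u\<in>(\<lambda>w. (G w, Z w)) ` S. \<Sum>x\<in>PiE I (\<lambda>i. X i ` S). \<Psi> (x, u))"
      by (rule sum.swap)
    also have "\<dots> \<le> (\<Sum>u\<in>(\<lambda>w. (G w, Z w)) ` S. bb u)"
    proof (rule sum_mono)
      fix u
      have "(\<Sum>x\<in>PiE I (\<lambda>i. X i ` S). \<Psi> (x, u)) = bb u * (\<Sum>x\<in>PiE I (\<lambda>i. X i ` S). \<Prod>i\<in>I. aa i (x i) u / bb u)"
        by (simp add: \<Psi>_def sum_distrib_left)
      also have "(\<Sum>x\<in>PiE I (\<lambda>i. X i ` S). \<Prod>i\<in>I. aa i (x i) u / bb u) = (\<Prod>i\<in>I. \<Sum>x0\<in>X i ` S. aa i x0 u / bb u)"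
        using finI finS by (intro prod_sum_PiE[symmetric]) auto
      finally have eq: "(\<Sum>x\<in>PiE I (\<lambda>i. X i ` S). \<Psi> (x, u)) = bb u * (\<Prod>i\<in>I. \<Sum>x0\<in>X i ` S. aa i x0 u / bb u)" .
      have "(\<Prod>i\<in>I. \<Sum>x0\<in>X i ` S. aa i x0 u / bb u) \<le> 1"
      proof (rule prod_le_1)
        fix i assume i: "i \<in> I"
        have "(\<Sum>x0\<in>X i ` S. aa i x0 u) = bb u"
          unfolding aa_def bb_def
          using partition_Qev[OF fin, of "X i ` S" "X i" W "{w'. (G w', Z w') = u}"] finS
          by (simp add: S_def)
        hence "(\<Sum>x0\<in>X i ` S. aa i x0 u / bb u) = (if bb u = 0 then 0 else 1)"
          by (simp add: sum_divide_distrib[symmetric])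
        thus "0 \<le> (\<Sum>x0\<in>X i ` S. aa i x0 u / bb u) \<and> (\<Sum>x0\<in>X i ` S. aa i x0 u / bb u) \<le> 1" by simp
      qed
      thus "(\<Sum>x\<in>PiE I (\<lambda>i. X i ` S). \<Psi> (x, u)) \<le> bb u"
        unfolding eq using bb0[of u] by (simp add: mult_left_le)
    qed
    also have "\<dots> = 1"
    proof -
      have "(\<Sum>u\<in>(\<lambda>w. (G w, Z w)) ` S. bb u) = Qev P W UNIV"
        unfolding bb_def using partition_Qev[OF fin, of "(\<lambda>w. (G w, Z w)) ` S" "\<lambda>w. (G w, Z w)" W UNIV] finS
        by (simp add: S_def)
      thus ?thesis using pW by (simp add: Qev_def)
    qed
    finally have s1: "(\<Sum>w\<in>S. q w * A w) \<le> 1" .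
    have "(\<Sum>w\<in>S. q w * A w) > 0"
    proof -
      obtain w0 where w0: "w0 \<in> S" "q w0 \<noteq> 0"
        using q1 by (metis sum.neutral zero_neq_one)
      hence "q w0 > 0" using q0 by (simp add: less_le)
      have nn: "0 \<le> q w * A w" if "w \<in> S" for w
      proof (cases "q w = 0")
        case False
        hence "q w > 0" using q0[of w] by (simp add: less_le)
        thus ?thesis using Apos[OF that qW'] by (intro mult_nonneg_nonneg) auto
      qed simp
      have "q w0 * A w0 > 0" using w0 qW' Apos \<open>q w0 > 0\<close> by auto
      moreover have "q w0 * A w0 \<le> (\<Sum>w\<in>S. q w * A w)"
        using finS w0 nn by (intro member_le_sum) auto
      ultimately show ?thesis by linarith
    qed
    hence "ln (\<Sum>w\<in>S. q w * A w) \<le> 0" using s1 by simp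
    thus ?thesis using J by linarith
  qed
  have partB: "(\<Sum>w\<in>S. q w * ln (B w)) \<le> ln (N / pw)"
  proof -
    have BB: "B w \<le> g w / (pw * b w)" if w: "w \<in> S" "w \<in> W" for w
    proof -
      have "e w \<le> prb P {w'. (\<forall>i\<in>I. X i w' = X i w) \<and> G w' = G w} / pw"
        unfolding e_def Qev_def pw_def using pW by (intro divide_right_mono prb_le_mono) auto
      also have "\<dots> = g w * (\<Prod>i\<in>I. c i w) / pw" using CI[of w] w by (simp add: g_def c_def S_def)
      finally have "e w \<le> g w * (\<Prod>i\<in>I. c i w) / pw" .
      moreover have "(\<Prod>i\<in>I. c i w) > 0" using cpos[OF w] by (intro prod_pos) auto
      ultimately show ?thesis using bpos[OF w] pwp
        by (simp add: B_def field_simps)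
    qed
    have "(\<Sum>w\<in>S. q w * ln (B w)) \<le> (\<Sum>w\<in>S. q w * ln (g w / (pw * b w)))"
    proof (rule sum_mono)
      fix w assume w: "w \<in> S"
      show "q w * ln (B w) \<le> q w * ln (g w / (pw * b w))"
      proof (cases "w \<in> W")
        case True
        thus ?thesis using BB[OF w True] Bpos[OF w True] q0[of w] by (intro mult_left_mono) auto
      qed (simp add: q_def qW_def)
    qed
    also have "\<dots> \<le> ln (\<Sum>w\<in>S. q w * (g w / (pw * b w)))"
      using jensen_ln[OF finS, of q "\<lambda>w. g w / (pw * b w)"] q0 q1 qW' gpos bpos pwp
      by (auto intro!: divide_pos_pos mult_pos_pos)
    also have "\<dots> \<le> ln (N / pw)"
    proof -
      define U where "U w = (G w, Z w)" for w
      define gg where "gg (u::'gg \<times> 'z) = prb P {w'. G w' = fst u}" for u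
      define bb where "bb u = Qev P W {w'. U w' = u}" for u
      have "(\<Sum>w\<in>S. q w * (g w / (pw * b w))) = (\<Sum>w\<in>S. q w * (\<lambda>u. gg u / (pw * bb u)) (U w))"
        by (simp add: gg_def bb_def g_def b_def U_def)
      also have "\<dots> = (\<Sum>u\<in>U ` S. Qev P W {w. U w = u} * (gg u / (pw * bb u)))"
        unfolding q_def S_def by (rule group_q[OF fin])
      also have "\<dots> = (\<Sum>u\<in>U ` S. if bb u = 0 then 0 else gg u / pw)"
        by (intro sum.cong) (auto simp: bb_def)
      also have "\<dots> = (\<Sum>u\<in>{u\<in>U ` S. bb u \<noteq> 0}. gg u / pw)"
        using finS by (subst sum.inter_filter) (auto intro!: sum.cong)
      also have "\<dots> \<le> (\<Sum>u\<in>G ` S \<times> Z ` (S \<inter> W). gg u / pw)"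
      proof (rule sum_mono2)
        show "finite (G ` S \<times> Z ` (S \<inter> W))" using finS by auto
        show "{u \<in> U ` S. bb u \<noteq> 0} \<subseteq> G ` S \<times> Z ` (S \<inter> W)"
        proof
          fix u assume "u \<in> {u \<in> U ` S. bb u \<noteq> 0}"
          then obtain w where w: "w \<in> S" "U w = u" "bb u \<noteq> 0" by auto
          hence "prb P ({w'. U w' = u} \<inter> W) \<noteq> 0" by (simp add: bb_def Qev_def)
          hence "set_pmf P \<inter> ({w'. U w' = u} \<inter> W) \<noteq> {}" by (simp add: measure_pmf_zero_iff)
          then obtain w' where "w' \<in> S" "U w' = u" "w' \<in> W" by (auto simp: S_def)
          thus "u \<in> G ` S \<times> Z ` (S \<inter> W)" by (auto simp: U_def)
        qed
        show "\<And>u. u \<in> G ` S \<times> Z ` (S \<inter> W) - {u \<in> U ` S. bb u \<noteq> 0} \<Longrightarrow> 0 \<le> gg u / pw"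
          using pwp by (simp add: gg_def)
      qed
      also have "\<dots> = (\<Sum>(\<gamma>,z)\<in>G ` S \<times> Z ` (S \<inter> W). prb P {w'. G w' = \<gamma>} / pw)"
        by (intro sum.cong) (auto simp: gg_def)
      also have "\<dots> = (\<Sum>\<gamma>\<in>G ` S. \<Sum>z\<in>Z ` (S \<inter> W). prb P {w'. G w' = \<gamma>} / pw)"
        by (rule sum.cartesian_product[symmetric])
      also have "\<dots> = (\<Sum>\<gamma>\<in>G ` S. real (card (Z ` (S \<inter> W))) * (prb P {w'. G w' = \<gamma> \<and> w' \<in> UNIV} / pw))"
        by (intro sum.cong) auto
      also have "\<dots> = real (card (Z ` (S \<inter> W))) * (\<Sum>\<gamma>\<in>G ` S. prb P {w'. G w' = \<gamma> \<and> w' \<in> UNIV}) / pw"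
        by (simp only: sum_distrib_left[symmetric] sum_divide_distrib[symmetric] times_divide_eq_right)
      also have "(\<Sum>\<gamma>\<in>G ` S. prb P {w'. G w' = \<gamma> \<and> w' \<in> UNIV}) = 1"
        using partition_sum[OF fin, of "G ` S" G UNIV] finS by (simp add: S_def)
      also have "real (card (Z ` (S \<inter> W))) * 1 / pw \<le> N / pw"
        using N pwp by (simp add: S_def divide_right_mono)
      finally have le: "(\<Sum>w\<in>S. q w * (g w / (pw * b w))) \<le> N / pw" .
      have "(\<Sum>w\<in>S. q w * (g w / (pw * b w))) > 0"
      proof -
        obtain w0 where w0: "w0 \<in> S" "q w0 \<noteq> 0"
          using q1 by (metis sum.neutral zero_neq_one)
        hence qp: "q w0 > 0" using q0 by (simp add: less_le)
        have pos: "\<And>w. w \<in> S \<Longrightarrow> q w > 0 \<Longrightarrow> g w / (pw * b w) > 0"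
          using qW' gpos bpos pwp by (auto intro!: divide_pos_pos mult_pos_pos)
        have nn: "0 \<le> q w * (g w / (pw * b w))" if "w \<in> S" for w
        proof (cases "q w = 0")
          case False
          hence "q w > 0" using q0[of w] by (simp add: less_le)
          thus ?thesis using pos[OF that] by (intro mult_nonneg_nonneg) auto
        qed simp
        have "q w0 * (g w0 / (pw * b w0)) > 0" by (rule mult_pos_pos[OF qp pos[OF w0(1) qp]])
        moreover have "q w0 * (g w0 / (pw * b w0)) \<le> (\<Sum>w\<in>S. q w * (g w / (pw * b w)))"
          using finS w0 nn by (intro member_le_sum) auto
        ultimately show ?thesis by linarith
      qed
      thus ?thesis using le by simp
    qed
    finally show ?thesis .
  qed
  have "(\<Sum>i\<in>I. \<Sum>w\<in>S. q w * ln (a i w / (c i w * b w))) \<le> ln (N / pw)"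
    using LHS partA partB by linarith
  thus ?thesis by (simp add: S_def q_def a_def b_def c_def pw_def)
qed


lemma sum_fiber_prb:
  assumes fin: "finite (set_pmf P)" and Ys: "finite Ys" "Y ` set_pmf P \<subseteq> Ys"
  shows "(\<Sum>y\<in>{y\<in>Ys. h y = u}. prb P {w. Y w = y \<and> w \<in> E}) = prb P {w. h (Y w) = u \<and> w \<in> E}"
proof -
  have "(\<Sum>y\<in>{y\<in>Ys. h y = u}. prb P {w. Y w = y \<and> w \<in> E})
      = (\<Sum>y\<in>Ys. if h y = u then prb P {w. Y w = y \<and> w \<in> E} else 0)"
    using Ys(1) by (rule sum.inter_filter)
  also have "\<dots> = (\<Sum>y\<in>Ys. prb P {w. Y w = y \<and> w \<in> {w. h (Y w) = u \<and> w \<in> E}})"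
  proof (rule sum.cong[OF refl])
    fix y
    show "(if h y = u then prb P {w. Y w = y \<and> w \<in> E} else 0) = prb P {w. Y w = y \<and> w \<in> {w. h (Y w) = u \<and> w \<in> E}}"
    proof (cases "h y = u")
      case True
      thus ?thesis by (simp, intro arg_cong[where f="prb P"]) auto
    next
      case False
      hence "{w. Y w = y \<and> w \<in> {w. h (Y w) = u \<and> w \<in> E}} = {}" by auto
      hence "prb P {w. Y w = y \<and> w \<in> {w. h (Y w) = u \<and> w \<in> E}} = 0" by (simp only: measure_empty)
      thus ?thesis by (simp only: if_not_P[OF False])
    qed
  qed
  also have "\<dots> = prb P {w. h (Y w) = u \<and> w \<in> E}"
    using partition_sum[OF fin Ys, of "{w. h (Y w) = u \<and> w \<in> E}"] by simp
  finally show ?thesis .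
qed

lemma tv_split:
  fixes P :: "'w pmf" and Y :: "'w \<Rightarrow> 'y" and R :: "'w \<Rightarrow> 'r" and h :: "'y \<Rightarrow> 'u"
  assumes fin: "finite (set_pmf P)" and pW: "prb P W > 0"
  shows "2 * tvd (PYcond P Y R W id) (PYcond P Y R W h)
     \<le> 2 * (\<Sum>y\<in>Y ` set_pmf P. \<bar>prb P {w. Y w = y} - prb P {w. w \<in> W \<and> Y w = y} / prb P W\<bar>)
       + (\<Sum>y\<in>Y ` set_pmf P. \<Sum>r\<in>R ` set_pmf P.
            \<bar>prb P {w. R w = r \<and> w \<in> W \<and> Y w = y} / prb P W
             - prb P {w. Y w = y} / prb P {w. h (Y w) = h y} * (prb P {w. R w = r \<and> w \<in> W \<and> h (Y w) = h y} / prb P W)\<bar>)"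
proof -
  define S where "S = set_pmf P"
  define pw where "pw = prb P W"
  define Ys where "Ys = Y ` S"
  define Rs where "Rs = R ` S"
  define PY where "PY y = prb P {w. Y w = y}" for y
  define Ph where "Ph u = prb P {w. h (Y w) = u}" for u
  define c where "c y = prb P {w. w \<in> W \<and> Y w = y}" for y
  define d where "d u = prb P {w. w \<in> W \<and> h (Y w) = u}" for u
  define e where "e r y = prb P {w. R w = r \<and> w \<in> W \<and> Y w = y}" for r y
  define f where "f r u = prb P {w. R w = r \<and> w \<in> W \<and> h (Y w) = u}" for r u
  define A where "A y r = PY y * (e r y / c y)" for y r
  define B where "B y r = PY y * (f r (h y) / d (h y))" for y r
  define Qf where "Qf y r = e r y / pw" for y r
  define B' where "B' y r = PY y / Ph (h y) * (f r (h y) / pw)" for y r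
  have finS: "finite S" using fin by (simp add: S_def)
  have finYs: "finite Ys" and finRs: "finite Rs" using finS by (auto simp: Ys_def Rs_def)
  have pwp: "pw > 0" using pW by (simp add: pw_def)
  have PY0: "PY y \<ge> 0" for y by (simp add: PY_def)
  have Ph0: "Ph u \<ge> 0" for u by (simp add: Ph_def)
  have e0: "e r y \<ge> 0" for r y by (simp add: e_def)
  have f0: "f r u \<ge> 0" for r u by (simp add: f_def)
  have esum: "(\<Sum>r\<in>Rs. e r y) = c y" for y
    unfolding e_def c_def using partition_sum[OF fin finRs, of R "{w. w \<in> W \<and> Y w = y}"]
    by (simp add: Rs_def S_def)
  have fsum: "(\<Sum>r\<in>Rs. f r u) = d u" for u
    unfolding f_def d_def using partition_sum[OF fin finRs, of R "{w. w \<in> W \<and> h (Y w) = u}"]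
    by (simp add: Rs_def S_def)
  have ec: "e r y \<le> c y" for r y unfolding e_def c_def by (rule prb_le_mono) auto
  have fd: "f r u \<le> d u" for r u unfolding f_def d_def by (rule prb_le_mono) auto
  have zeroA: "A y r = 0" if "(y, r) \<notin> Ys \<times> Rs" for y r
  proof -
    have "PY y = 0 \<or> e r y = 0"
    proof (cases "y \<in> Ys")
      case False
      hence "set_pmf P \<inter> {w. Y w = y} = {}" by (auto simp: Ys_def S_def)
      thus ?thesis by (simp add: PY_def measure_pmf_zero_iff)
    next
      case True
      hence "r \<notin> Rs" using that by auto
      hence "set_pmf P \<inter> {w. R w = r \<and> w \<in> W \<and> Y w = y} = {}" by (auto simp: Rs_def S_def)
      thus ?thesis by (simp add: e_def measure_pmf_zero_iff)
    qed
    thus ?thesis by (auto simp: A_def)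
  qed
  have zeroB: "B y r = 0" if "(y, r) \<notin> Ys \<times> Rs" for y r
  proof -
    have "PY y = 0 \<or> f r (h y) = 0"
    proof (cases "y \<in> Ys")
      case False
      hence "set_pmf P \<inter> {w. Y w = y} = {}" by (auto simp: Ys_def S_def)
      thus ?thesis by (simp add: PY_def measure_pmf_zero_iff)
    next
      case True
      hence "r \<notin> Rs" using that by auto
      hence "set_pmf P \<inter> {w. R w = r \<and> w \<in> W \<and> h (Y w) = h y} = {}" by (auto simp: Rs_def S_def)
      thus ?thesis by (simp add: f_def measure_pmf_zero_iff)
    qed
    thus ?thesis by (auto simp: B_def)
  qed
  have PYc_A: "PYcond P Y R W id = A" by (intro ext) (simp add: PYcond_def A_def PY_def e_def c_def)
  have PYc_B: "PYcond P Y R W h = B" by (intro ext) (simp add: PYcond_def B_def PY_def f_def d_def)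
  have L0: "2 * tvd A B = (\<Sum>y\<in>Ys. \<Sum>r\<in>Rs. \<bar>A y r - B y r\<bar>)"
  proof -
    have "(\<Sum>\<^sub>\<infinity>(y, r)\<in>UNIV. \<bar>A y r - B y r\<bar>) = (\<Sum>\<^sub>\<infinity>(y, r)\<in>Ys \<times> Rs. \<bar>A y r - B y r\<bar>)"
    proof (rule infsum_cong_neutral)
      fix x assume x: "x \<in> UNIV - Ys \<times> Rs"
      obtain y r where xy: "x = (y, r)" by (cases x)
      have "(y, r) \<notin> Ys \<times> Rs" using x xy by simp
      thus "(case x of (y, r) \<Rightarrow> \<bar>A y r - B y r\<bar>) = 0" using zeroA zeroB xy by simp
    qed auto
    also have "\<dots> = (\<Sum>(y, r)\<in>Ys \<times> Rs. \<bar>A y r - B y r\<bar>)" using finYs finRs by simp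
    also have "\<dots> = (\<Sum>y\<in>Ys. \<Sum>r\<in>Rs. \<bar>A y r - B y r\<bar>)" by (rule sum.cartesian_product[symmetric])
    finally show ?thesis by (simp add: tvd_def)
  qed
  have L1: "(\<Sum>r\<in>Rs. \<bar>A y r - Qf y r\<bar>) \<le> \<bar>PY y - c y / pw\<bar>" for y
  proof (cases "c y = 0")
    case True
    hence "e r y = 0" for r using ec[of r y] e0[of r y] by linarith
    thus ?thesis by (simp add: A_def Qf_def)
  next
    case False
    hence cp: "c y > 0" by (simp add: c_def less_le)
    have "\<bar>A y r - Qf y r\<bar> = e r y / c y * \<bar>PY y - c y / pw\<bar>" for r
    proof -
      have "A y r - Qf y r = e r y / c y * (PY y - c y / pw)"
        using cp pwp by (simp add: A_def Qf_def field_simps)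
      thus ?thesis using e0[of r y] cp by (simp add: abs_mult)
    qed
    hence "(\<Sum>r\<in>Rs. \<bar>A y r - Qf y r\<bar>) = (\<Sum>r\<in>Rs. e r y) / c y * \<bar>PY y - c y / pw\<bar>"
      by (simp add: sum_distrib_right sum_divide_distrib)
    also have "\<dots> = \<bar>PY y - c y / pw\<bar>" using esum[of y] cp by simp
    finally show ?thesis by simp
  qed
  have Phpos: "Ph (h y) > 0" if "y \<in> Ys" for y
    using that unfolding Ys_def S_def Ph_def by (auto intro!: prb_pos)
  have L2a: "(\<Sum>r\<in>Rs. \<bar>B' y r - B y r\<bar>) \<le> PY y / Ph (h y) * \<bar>Ph (h y) - d (h y) / pw\<bar>" if y: "y \<in> Ys" for y
  proof (cases "d (h y) = 0")
    case True
    hence "f r (h y) = 0" for r using fd[of r "h y"] f0[of r "h y"] by linarith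
    thus ?thesis using PY0[of y] Ph0[of "h y"] by (simp add: B_def B'_def)
  next
    case False
    hence dp: "d (h y) > 0" by (simp add: d_def less_le)
    have php: "Ph (h y) > 0" using Phpos[OF y] .
    have "\<bar>B' y r - B y r\<bar> = f r (h y) / d (h y) * (PY y / Ph (h y) * \<bar>Ph (h y) - d (h y) / pw\<bar>)" for r
    proof -
      have "B' y r - B y r = f r (h y) / d (h y) * (PY y / Ph (h y) * (d (h y) / pw - Ph (h y)))"
        using dp pwp php by (simp add: B_def B'_def field_simps)
      thus ?thesis using f0[of r "h y"] dp php PY0[of y] by (simp add: abs_mult abs_minus_commute)
    qed
    hence "(\<Sum>r\<in>Rs. \<bar>B' y r - B y r\<bar>) = (\<Sum>r\<in>Rs. f r (h y)) / d (h y) * (PY y / Ph (h y) * \<bar>Ph (h y) - d (h y) / pw\<bar>)"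
      by (simp add: sum_distrib_right sum_divide_distrib)
    also have "\<dots> = PY y / Ph (h y) * \<bar>Ph (h y) - d (h y) / pw\<bar>" using fsum[of "h y"] dp by simp
    finally show ?thesis by simp
  qed
  have YsS: "Y ` set_pmf P \<subseteq> Ys" by (simp add: Ys_def S_def)
  have fibPY: "(\<Sum>y\<in>{y\<in>Ys. h y = u}. PY y) = Ph u" for u
    using sum_fiber_prb[OF fin finYs YsS, where h=h and u=u and E=UNIV] by (simp add: PY_def Ph_def)
  have fibc: "(\<Sum>y\<in>{y\<in>Ys. h y = u}. c y) = d u" for u
  proof -
    have "(\<Sum>y\<in>{y\<in>Ys. h y = u}. c y) = (\<Sum>y\<in>{y\<in>Ys. h y = u}. prb P {w. Y w = y \<and> w \<in> W})"
      by (intro sum.cong) (auto simp: c_def conj_commute)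
    also have "\<dots> = d u" using sum_fiber_prb[OF fin finYs YsS, where h=h and u=u and E=W] by (simp add: d_def conj_commute)
    finally show ?thesis .
  qed
  have L2: "(\<Sum>y\<in>Ys. \<Sum>r\<in>Rs. \<bar>B' y r - B y r\<bar>) \<le> (\<Sum>y\<in>Ys. \<bar>PY y - c y / pw\<bar>)"
  proof -
    have "(\<Sum>y\<in>Ys. \<Sum>r\<in>Rs. \<bar>B' y r - B y r\<bar>) \<le> (\<Sum>y\<in>Ys. PY y / Ph (h y) * \<bar>Ph (h y) - d (h y) / pw\<bar>)"
      using L2a by (rule sum_mono)
    also have "\<dots> = (\<Sum>u\<in>h ` Ys. \<Sum>y\<in>{y\<in>Ys. h y = u}. PY y / Ph (h y) * \<bar>Ph (h y) - d (h y) / pw\<bar>)"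
      using finYs by (rule sum.image_gen)
    also have "\<dots> = (\<Sum>u\<in>h ` Ys. \<bar>Ph u - d u / pw\<bar>)"
    proof (rule sum.cong[OF refl])
      fix u assume u: "u \<in> h ` Ys"
      then obtain y0 where "y0 \<in> Ys" "h y0 = u" by auto
      hence php: "Ph u > 0" using Phpos by auto
      have "(\<Sum>y\<in>{y\<in>Ys. h y = u}. PY y / Ph (h y) * \<bar>Ph (h y) - d (h y) / pw\<bar>)
          = (\<Sum>y\<in>{y\<in>Ys. h y = u}. PY y) / Ph u * \<bar>Ph u - d u / pw\<bar>"
        by (simp add: sum_distrib_right sum_divide_distrib)
      also have "\<dots> = \<bar>Ph u - d u / pw\<bar>" using fibPY[of u] php by simp
      finally show "(\<Sum>y\<in>{y\<in>Ys. h y = u}. PY y / Ph (h y) * \<bar>Ph (h y) - d (h y) / pw\<bar>) = \<bar>Ph u - d u / pw\<bar>" .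
    qed
    also have "\<dots> = (\<Sum>u\<in>h ` Ys. \<bar>\<Sum>y\<in>{y\<in>Ys. h y = u}. (PY y - c y / pw)\<bar>)"
    proof (rule sum.cong[OF refl])
      fix u
      show "\<bar>Ph u - d u / pw\<bar> = \<bar>\<Sum>y\<in>{y\<in>Ys. h y = u}. (PY y - c y / pw)\<bar>"
        using fibPY[of u] fibc[of u] by (simp add: sum_subtractf sum_divide_distrib[symmetric])
    qed
    also have "\<dots> \<le> (\<Sum>u\<in>h ` Ys. \<Sum>y\<in>{y\<in>Ys. h y = u}. \<bar>PY y - c y / pw\<bar>)"
      by (intro sum_mono sum_abs)
    also have "\<dots> = (\<Sum>y\<in>Ys. \<bar>PY y - c y / pw\<bar>)"
      using finYs by (rule sum.image_gen[symmetric])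
    finally show ?thesis .
  qed
  have tri: "\<bar>A y r - B y r\<bar> \<le> \<bar>A y r - Qf y r\<bar> + \<bar>Qf y r - B' y r\<bar> + \<bar>B' y r - B y r\<bar>" for y r
    by linarith
  have "2 * tvd A B \<le> (\<Sum>y\<in>Ys. \<Sum>r\<in>Rs. \<bar>A y r - Qf y r\<bar> + \<bar>Qf y r - B' y r\<bar> + \<bar>B' y r - B y r\<bar>)"
    unfolding L0 by (intro sum_mono tri)
  also have "\<dots> = (\<Sum>y\<in>Ys. \<Sum>r\<in>Rs. \<bar>A y r - Qf y r\<bar>) + (\<Sum>y\<in>Ys. \<Sum>r\<in>Rs. \<bar>Qf y r - B' y r\<bar>) + (\<Sum>y\<in>Ys. \<Sum>r\<in>Rs. \<bar>B' y r - B y r\<bar>)"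
    by (simp add: sum.distrib)
  also have "\<dots> \<le> (\<Sum>y\<in>Ys. \<bar>PY y - c y / pw\<bar>) + (\<Sum>y\<in>Ys. \<Sum>r\<in>Rs. \<bar>Qf y r - B' y r\<bar>) + (\<Sum>y\<in>Ys. \<bar>PY y - c y / pw\<bar>)"
  proof -
    have "(\<Sum>y\<in>Ys. \<Sum>r\<in>Rs. \<bar>A y r - Qf y r\<bar>) \<le> (\<Sum>y\<in>Ys. \<bar>PY y - c y / pw\<bar>)"
      by (rule sum_mono) (rule L1)
    thus ?thesis using L2 by linarith
  qed
  finally show ?thesis
    unfolding PYc_A PYc_B
    by (simp add: Ys_def Rs_def S_def PY_def c_def pw_def Qf_def e_def B'_def Ph_def f_def)
qed


definition Dset :: "nat \<Rightarrow> nat set set" where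
  "Dset k = {S. S \<subseteq> {0..<k} \<and> card S = k - 1}"

lemma Dset_eq:
  assumes "1 \<le> k"
  shows "Dset k = (\<lambda>t. {0..<k} - {t}) ` {0..<k}"
proof
  show "Dset k \<subseteq> (\<lambda>t. {0..<k} - {t}) ` {0..<k}"
  proof
    fix S assume "S \<in> Dset k"
    hence S: "S \<subseteq> {0..<k}" "card S = k - 1" by (auto simp: Dset_def)
    have fS: "finite S" using S(1) finite_subset by blast
    have "card ({0..<k} - S) = card {0..<k} - card S" by (rule card_Diff_subset[OF fS S(1)])
    hence "card ({0..<k} - S) = 1" using S(2) assms by simp
    then obtain t where t: "{0..<k} - S = {t}" by (auto simp: card_1_singleton_iff)
    have "t \<in> {0..<k} - S" using t by blast
    hence "t < k" by simp
    moreover have "S = {0..<k} - {t}" using t S(1) by blast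
    ultimately show "S \<in> (\<lambda>t. {0..<k} - {t}) ` {0..<k}" by auto
  qed
  show "(\<lambda>t. {0..<k} - {t}) ` {0..<k} \<subseteq> Dset k"
    by (auto simp: Dset_def)
qed

lemma Dset_inj: "inj_on (\<lambda>t. {0..<k} - {t}) {0..<k}"
proof (rule inj_onI)
  fix x y assume x: "x \<in> {0..<k}" and eq: "{0..<k} - {x} = {0..<k} - {y}"
  have "x \<notin> {0..<k} - {x}" by blast
  hence "x \<notin> {0..<k} - {y}" using eq by simp
  thus "x = y" using x by blast
qed

lemma Dset_card: "1 \<le> k \<Longrightarrow> card (Dset k) = k"
proof -
  assume k: "1 \<le> k"
  have "card (Dset k) = card ((\<lambda>t. {0..<k} - {t}) ` {0..<k})" by (simp only: Dset_eq[OF k])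
  also have "\<dots> = card {0..<k}" by (rule card_image[OF Dset_inj])
  finally show ?thesis by simp
qed

lemma Dset_fin: "finite (Dset k)"
  by (rule finite_subset[of _ "Pow {0..<k}"]) (auto simp: Dset_def)

lemma Dset_ne: "Dset k \<noteq> {}"
proof (cases "k = 0")
  case True
  hence "{} \<in> Dset k" by (simp add: Dset_def)
  thus ?thesis by auto
next
  case False
  hence "{0..<k} - {0} \<in> Dset k" using Dset_eq[of k] by auto
  thus ?thesis by auto
qed

lemma prb_UD:
  assumes "1 \<le> k" "d \<in> Dset k"
  shows "prb (pmf_of_set (Dset k)) {d} = 1 / real k"
  using assms Dset_fin Dset_ne Dset_card[OF assms(1)] by (simp add: measure_pmf_single)

lemma sample_alt: "sample k n m mu = pair_pmf (Pi_pmf {0..<n} [] (\<lambda>_. mu)) (Pi_pmf {0..<m} {} (\<lambda>_. pmf_of_set (Dset k)))"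
  by (simp add: sample_def Dset_def)

definition unz :: "(nat \<Rightarrow> 'a \<times> 'b) \<Rightarrow> (nat \<Rightarrow> 'a) \<times> (nat \<Rightarrow> 'b)" where
  "unz h = ((\<lambda>j. fst (h j)), (\<lambda>j. snd (h j)))"

lemma unz_inj: "inj unz"
  by (rule injI) (auto simp: unz_def fun_eq_iff prod_eq_iff)

lemma pair_Pi:
  fixes p :: "nat \<Rightarrow> 'a pmf" and q :: "nat \<Rightarrow> 'b pmf"
  assumes "finite A"
  shows "pair_pmf (Pi_pmf A a p) (Pi_pmf A b q) = map_pmf unz (Pi_pmf A (a, b) (\<lambda>j. pair_pmf (p j) (q j)))"
proof (rule pmf_eqI)
  fix x :: "(nat \<Rightarrow> 'a) \<times> (nat \<Rightarrow> 'b)"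
  obtain X D where x: "x = (X, D)" by (cases x)
  have "x = unz (\<lambda>j. (X j, D j))" by (simp add: x unz_def)
  hence "pmf (map_pmf unz (Pi_pmf A (a, b) (\<lambda>j. pair_pmf (p j) (q j)))) x
       = pmf (Pi_pmf A (a, b) (\<lambda>j. pair_pmf (p j) (q j))) (\<lambda>j. (X j, D j))"
    by (simp add: pmf_map_inj'[OF unz_inj])
  also have "\<dots> = pmf (pair_pmf (Pi_pmf A a p) (Pi_pmf A b q)) x"
    using assms by (auto simp: pmf_Pi pmf_pair x prod.distrib)
  finally show "pmf (pair_pmf (Pi_pmf A a p) (Pi_pmf A b q)) x = pmf (map_pmf unz (Pi_pmf A (a, b) (\<lambda>j. pair_pmf (p j) (q j)))) x"
    by simp
qed

definition cp :: "nat \<Rightarrow> nat \<Rightarrow> 'q list pmf \<Rightarrow> nat \<Rightarrow> ('q list \<times> nat set) pmf" where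
  "cp k m mu j = pair_pmf mu (if j < m then pmf_of_set (Dset k) else return_pmf {})"

lemma sample_Pi:
  assumes "m \<le> n"
  shows "sample k n m mu = map_pmf unz (Pi_pmf {0..<n} ([], {}) (cp k m mu))"
proof -
  have "Pi_pmf {0..<m} {} (\<lambda>_. pmf_of_set (Dset k))
      = Pi_pmf {0..<n} {} (\<lambda>j. if j < m then pmf_of_set (Dset k) else return_pmf {})"
  proof -
    have "Pi_pmf {0..<n} {} (\<lambda>j. if j < m then pmf_of_set (Dset k) else return_pmf {})
        = Pi_pmf {0..<m} {} (\<lambda>j. if j < m then pmf_of_set (Dset k) else return_pmf {})"
      using assms by (intro Pi_pmf_subset') auto
    also have "\<dots> = Pi_pmf {0..<m} {} (\<lambda>_. pmf_of_set (Dset k))"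
      by (intro Pi_pmf_cong) auto
    finally show ?thesis by simp
  qed
  thus ?thesis by (simp add: sample_alt pair_Pi cp_def[abs_def])
qed

lemma sample_prod:
  assumes "m \<le> n"
  shows "prb (sample k n m mu) {w. \<forall>j<n. (fst w j, snd w j) \<in> E j} = (\<Prod>j<n. prb (cp k m mu j) (E j))"
proof -
  have "unz -` {w. \<forall>j<n. (fst w j, snd w j) \<in> E j} = Pi {0..<n} E"
    by (auto simp: unz_def Pi_def)
  hence "prb (sample k n m mu) {w. \<forall>j<n. (fst w j, snd w j) \<in> E j} = prb (Pi_pmf {0..<n} ([], {}) (cp k m mu)) (Pi {0..<n} E)"
    by (simp add: sample_Pi[OF assms])
  also have "\<dots> = (\<Prod>j\<in>{0..<n}. prb (cp k m mu j) (E j))" by (rule measure_Pi_pmf_Pi) simp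
  finally show ?thesis by (simp add: atLeast0LessThan)
qed

lemma sample_single:
  assumes "m \<le> n" "j < n"
  shows "prb (sample k n m mu) {w. (fst w j, snd w j) \<in> E} = prb (cp k m mu j) E"
proof -
  have eq: "{w. (fst w j, snd w j) \<in> E} = {w. \<forall>l<n. (fst w l, snd w l) \<in> (if l = j then E else UNIV)}"
    using assms by auto
  have "prb (sample k n m mu) {w. (fst w j, snd w j) \<in> E} = (\<Prod>l<n. prb (cp k m mu l) (if l = j then E else UNIV))"
    unfolding eq by (rule sample_prod[OF assms(1)])
  also have "\<dots> = (\<Prod>l<n. if l = j then prb (cp k m mu j) E else 1)"
    by (intro prod.cong) auto
  also have "\<dots> = prb (cp k m mu j) E" using assms(2) by (simp add: prod.delta)
  finally show ?thesis .
qed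

lemma set_sample:
  "set_pmf (sample k n m mu) = PiE_dflt {0..<n} [] (\<lambda>_. set_pmf mu) \<times> PiE_dflt {0..<m} {} (\<lambda>_. Dset k)"
  by (simp add: sample_alt set_Pi_pmf Dset_fin Dset_ne o_def)

lemma fin_sample:
  assumes "finite (set_pmf mu)"
  shows "finite (set_pmf (sample k n m mu))"
  unfolding set_sample using assms Dset_fin by auto

lemma prb_pair_mid:
  assumes fA: "finite (set_pmf A)" and fB: "finite (set_pmf B)" and fC: "finite (set_pmf C)"
  shows "prb (pair_pmf A (pair_pmf B C)) {x. fst (snd x) \<in> Bs \<and> (fst x, snd (snd x)) \<in> F}
       = prb B Bs * prb (pair_pmf A C) F"
proof -
  let ?SA = "set_pmf A" and ?SB = "set_pmf B" and ?SC = "set_pmf C"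
  have f1: "finite (set_pmf (pair_pmf A (pair_pmf B C)))" using assms by simp
  have f2: "finite (set_pmf (pair_pmf A C))" using assms by simp
  have "prb (pair_pmf A (pair_pmf B C)) {x. fst (snd x) \<in> Bs \<and> (fst x, snd (snd x)) \<in> F}
     = (\<Sum>x\<in>?SA \<times> (?SB \<times> ?SC). if fst (snd x) \<in> Bs \<and> (fst x, snd (snd x)) \<in> F then pmf (pair_pmf A (pair_pmf B C)) x else 0)"
    using prb_sum[OF f1] by simp
  also have "\<dots> = (\<Sum>a\<in>?SA. \<Sum>b\<in>?SB. \<Sum>c\<in>?SC. if b \<in> Bs \<and> (a, c) \<in> F then pmf A a * (pmf B b * pmf C c) else 0)"
    by (simp add: sum.cartesian_product' pmf_pair cong: if_cong)
  also have "\<dots> = (\<Sum>a\<in>?SA. \<Sum>b\<in>?SB. \<Sum>c\<in>?SC. (if b \<in> Bs then pmf B b else 0) * (if (a, c) \<in> F then pmf A a * pmf C c else 0))"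
    by (intro sum.cong refl) auto
  also have "\<dots> = (\<Sum>a\<in>?SA. (\<Sum>b\<in>?SB. if b \<in> Bs then pmf B b else 0) * (\<Sum>c\<in>?SC. if (a, c) \<in> F then pmf A a * pmf C c else 0))"
    by (simp only: sum_product)
  also have "\<dots> = (\<Sum>b\<in>?SB. if b \<in> Bs then pmf B b else 0) * (\<Sum>a\<in>?SA. \<Sum>c\<in>?SC. if (a, c) \<in> F then pmf A a * pmf C c else 0)"
    by (simp only: sum_distrib_left)
  also have "(\<Sum>b\<in>?SB. if b \<in> Bs then pmf B b else 0) = prb B Bs" using prb_sum[OF fB] by simp
  also have "(\<Sum>a\<in>?SA. \<Sum>c\<in>?SC. if (a, c) \<in> F then pmf A a * pmf C c else 0) = prb (pair_pmf A C) F"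
    using prb_sum[OF f2, of F] by (simp add: sum.cartesian_product' pmf_pair cong: if_cong)
  finally show ?thesis .
qed


lemma fin_Pi_pmf:
  assumes "finite A" "\<And>x. x \<in> A \<Longrightarrow> finite (set_pmf (p x))"
  shows "finite (set_pmf (Pi_pmf A d p))"
  using assms by (simp add: set_Pi_pmf finite_PiE_dflt)

lemma D_indep:
  assumes i: "i < m" and fmu: "finite (set_pmf mu)"
    and indep: "\<And>X D d'. (X, D) \<in> E \<longleftrightarrow> (X, D(i := d')) \<in> E"
  shows "prb (sample k n m mu) {w. snd w i = d \<and> w \<in> E} = prb (pmf_of_set (Dset k)) {d} * prb (sample k n m mu) E"
proof -
  define U where "U = pmf_of_set (Dset k)"
  define A' where "A' = {0..<m} - {i}"
  define PD' where "PD' = Pi_pmf A' {} (\<lambda>_. U)"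
  define PX where "PX = Pi_pmf {0..<n} [] (\<lambda>_. mu)"
  define M where "M = pair_pmf PX (pair_pmf U PD')"
  define \<phi> where "\<phi> x = (fst x, (snd (snd x))(i := fst (snd x)))" for x :: "(nat \<Rightarrow> 'a list) \<times> nat set \<times> (nat \<Rightarrow> nat set)"
  have ins: "{0..<m} = insert i A'" using i by (auto simp: A'_def)
  have "Pi_pmf {0..<m} {} (\<lambda>_. U) = map_pmf (\<lambda>(y, f). f(i := y)) (pair_pmf U PD')"
    unfolding ins PD'_def by (rule Pi_pmf_insert) (auto simp: A'_def)
  hence samp: "sample k n m mu = map_pmf \<phi> M"
    by (simp add: sample_alt U_def PX_def M_def pair_map_pmf2 \<phi>_def[abs_def] apsnd_def map_prod_def case_prod_unfold)
  have fU: "finite (set_pmf U)" using Dset_fin Dset_ne by (simp add: U_def)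
  have fPD: "finite (set_pmf PD')" unfolding PD'_def using fU by (intro fin_Pi_pmf) (auto simp: A'_def)
  have fPX: "finite (set_pmf PX)" unfolding PX_def using fmu by (intro fin_Pi_pmf) auto
  define E' where "E' = {(X, f). (X, f(i := d)) \<in> E}"
  have pre1: "\<phi> -` {w. snd w i = d \<and> w \<in> E} = {x. fst (snd x) \<in> {d} \<and> (fst x, snd (snd x)) \<in> E'}"
    by (auto simp: \<phi>_def E'_def)
  have pre2: "\<phi> -` E = {x. fst (snd x) \<in> UNIV \<and> (fst x, snd (snd x)) \<in> E'}"
  proof (auto simp: \<phi>_def E'_def)
    fix a b c assume "(a, c(i := b)) \<in> E"
    hence "(a, c(i := b, i := d)) \<in> E" using indep by blast
    thus "(a, c(i := d)) \<in> E" by simp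
  next
    fix a b c assume "(a, c(i := d)) \<in> E"
    hence "(a, c(i := d, i := b)) \<in> E" using indep by blast
    thus "(a, c(i := b)) \<in> E" by simp
  qed
  have "prb (sample k n m mu) {w. snd w i = d \<and> w \<in> E} = prb M {x. fst (snd x) \<in> {d} \<and> (fst x, snd (snd x)) \<in> E'}"
    by (simp only: samp measure_map_pmf pre1)
  also have "\<dots> = prb U {d} * prb (pair_pmf PX PD') E'"
    unfolding M_def by (rule prb_pair_mid[OF fPX fU fPD])
  finally have 1: "prb (sample k n m mu) {w. snd w i = d \<and> w \<in> E} = prb U {d} * prb (pair_pmf PX PD') E'" .
  have "prb (sample k n m mu) E = prb M {x. fst (snd x) \<in> UNIV \<and> (fst x, snd (snd x)) \<in> E'}"
    by (simp only: samp measure_map_pmf pre2)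
  also have "\<dots> = prb U UNIV * prb (pair_pmf PX PD') E'"
    unfolding M_def by (rule prb_pair_mid[OF fPX fU fPD])
  finally have 2: "prb (sample k n m mu) E = prb (pair_pmf PX PD') E'" by simp
  show ?thesis using 1 2 by (simp add: U_def)
qed


definition yv :: "nat \<Rightarrow> (nat \<Rightarrow> 'q set) \<Rightarrow> 'q list \<times> nat set \<Rightarrow> 'q option list" where
  "yv k Xb c = map (\<lambda>t. if fst c ! t \<in> Xb t then None else Some (fst c ! t)) [0..<k]"

definition om :: "nat \<Rightarrow> nat \<Rightarrow> (nat \<Rightarrow> 'q set) \<Rightarrow> nat \<Rightarrow> 'q list \<times> nat set
     \<Rightarrow> (nat set \<times> (nat \<Rightarrow> 'q option option)) + 'q list" where
  "om k m Xb j c = (if j < m then Inl (snd c, (\<lambda>t. if t \<in> snd c then Some (yv k Xb c ! t) else None)) else Inr (fst c))"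

lemma Yv_yv: "Yv k Xb X i = yv k Xb (X i, D i)"
  by (simp add: Yv_def yv_def)

lemma Om_om: "Om k m Xb X D j = om k m Xb j (X j, D j)"
  by (simp add: Om_def om_def Yv_yv[where D=D] cong: if_cong)

lemma prod_prefix:
  fixes a :: "nat \<Rightarrow> real"
  assumes "m \<le> n"
  shows "(\<Prod>j<n. if j < m then a j else 1) = (\<Prod>j<m. a j)"
proof -
  have "(\<Prod>j<n. if j < m then a j else 1) = (\<Prod>j\<in>{..<n} \<inter> {..<m}. a j)"
    by (subst prod.inter_restrict) auto
  also have "{..<n} \<inter> {..<m} = {..<m}" using assms by auto
  finally show ?thesis .
qed

locale cor =
  fixes k n m :: nat and Xs :: "nat \<Rightarrow> 'q set" and As :: "nat \<Rightarrow> 'a set"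
    and mu :: "'q list pmf" and V :: "'q list \<Rightarrow> 'a list \<Rightarrow> bool"
    and Xb :: "nat \<Rightarrow> 'q set" and f :: "nat \<Rightarrow> 'q list \<Rightarrow> 'a list"
  assumes game: "game k Xs As mu" and m1: "1 \<le> m" and mn: "m < n"
    and strat: "strategy k n Xs As f"
    and pW: "prb (sample k n m mu) (Wev k m n f V) > 0" and k1: "1 \<le> k"
begin

abbreviation "P \<equiv> sample k n m mu"
abbreviation "W \<equiv> Wev k m n f V"
abbreviation "S \<equiv> set_pmf P"
abbreviation "cc j w \<equiv> (fst w j, snd w j)"
abbreviation "Yi i w \<equiv> Yv k Xb (fst w) i"
abbreviation "Oi i w \<equiv> Om k m Xb (fst w) (snd w) i"
abbreviation "Gf w \<equiv> map (Om k m Xb (fst w) (snd w)) [0..<n]"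
abbreviation "Zf w \<equiv> Zv k m n f (fst w)"
abbreviation "Ri i w \<equiv> (Zv k m n f (fst w), Om_minus k m n Xb (fst w) (snd w) i)"

lemma mu_supp: "set_pmf mu \<subseteq> {x. length x = k \<and> (\<forall>t<k. x ! t \<in> Xs t)}"
  using game by (simp add: game_def)

lemma finXs: "t < k \<Longrightarrow> finite (Xs t)" and finAs: "t < k \<Longrightarrow> finite (As t)"
  using game by (auto simp: game_def)

lemma fin_mu: "finite (set_pmf mu)"
proof (rule finite_subset)
  show "set_pmf mu \<subseteq> {x. set x \<subseteq> (\<Union>t<k. Xs t) \<and> length x = k}"
  proof
    fix x assume "x \<in> set_pmf mu"
    hence x: "length x = k" "\<forall>t<k. x ! t \<in> Xs t" using mu_supp by auto
    have "set x \<subseteq> (\<Union>t<k. Xs t)"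
    proof
      fix a assume "a \<in> set x"
      then obtain t where "t < length x" "x ! t = a" by (auto simp: in_set_conv_nth)
      thus "a \<in> (\<Union>t<k. Xs t)" using x by auto
    qed
    thus "x \<in> {x. set x \<subseteq> (\<Union>t<k. Xs t) \<and> length x = k}" using x by simp
  qed
  show "finite {x. set x \<subseteq> (\<Union>t<k. Xs t) \<and> length x = k}"
    using finXs by (intro finite_lists_length_eq) auto
qed

lemma finP: "finite S"
  using fin_sample[OF fin_mu] .

lemma suppX: "w \<in> S \<Longrightarrow> j < n \<Longrightarrow> fst w j \<in> set_pmf mu"
  by (auto simp: set_sample PiE_dflt_def)

lemma prodP: "prb P {w. \<forall>j<n. cc j w \<in> E j} = (\<Prod>j<n. prb (cp k m mu j) (E j))"
  using sample_prod[of m n k mu E] mn by simp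

lemma singleP: "j < n \<Longrightarrow> prb P {w. cc j w \<in> E} = prb (cp k m mu j) E"
  using sample_single[of m n j k mu E] mn by simp

lemma prbUNIV: "prb P UNIV = 1"
  by (simp add: measure_pmf.prob_space)

lemma Yi_cc: "Yi i w = yv k Xb (cc i w)"
  by (simp add: Yv_yv[where D="snd w"])

lemma Oi_cc: "Oi j w = om k m Xb j (cc j w)"
  by (rule Om_om)

lemma razL:
  "(\<Sum>i\<in>{0..<m}. \<Sum>w\<in>S. qW P W w * ln (Qev P W {w'. Yi i w' = Yi i w} / prb P {w'. Yi i w' = Yi i w}))
     \<le> ln (1 / prb P W)"
proof -
  have CI: "prb P {w'. (\<forall>i\<in>{0..<m}. Yi i w' = Yi i w) \<and> (\<lambda>_. ()) w' = (\<lambda>_. ()) w}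
         = prb P {w'. (\<lambda>_. ()) w' = (\<lambda>_. ()) w} * (\<Prod>i\<in>{0..<m}. prb P {w'. Yi i w' = Yi i w \<and> (\<lambda>i _. ()) i w' = (\<lambda>i _. ()) i w} / prb P {w'. (\<lambda>i _. ()) i w' = (\<lambda>i _. ()) i w})"
    if "w \<in> S" for w
  proof -
    have ev: "{w'. (\<forall>i\<in>{0..<m}. Yi i w' = Yi i w) \<and> (\<lambda>_. ()) w' = (\<lambda>_. ()) w}
        = {w'. \<forall>j<n. cc j w' \<in> (if j < m then {c. yv k Xb c = Yi j w} else UNIV)}"
      using mn by (auto simp: Yi_cc)
    have "prb P {w'. (\<forall>i\<in>{0..<m}. Yi i w' = Yi i w) \<and> (\<lambda>_. ()) w' = (\<lambda>_. ()) w}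
        = (\<Prod>j<n. prb (cp k m mu j) (if j < m then {c. yv k Xb c = Yi j w} else UNIV))"
      unfolding ev by (rule prodP)
    also have "\<dots> = (\<Prod>j<n. if j < m then prb (cp k m mu j) {c. yv k Xb c = Yi j w} else 1)"
      by (intro prod.cong) auto
    also have "\<dots> = (\<Prod>j<m. prb (cp k m mu j) {c. yv k Xb c = Yi j w})"
      using mn by (intro prod_prefix) simp
    also have "\<dots> = (\<Prod>i\<in>{0..<m}. prb P {w'. Yi i w' = Yi i w})"
    proof (rule prod.cong)
      fix i assume "i \<in> {0..<m}"
      hence "i < n" using mn by simp
      thus "prb (cp k m mu i) {c. yv k Xb c = Yi i w} = prb P {w'. Yi i w' = Yi i w}"
        using singleP[of i "{c. yv k Xb c = Yi i w}"] by (simp add: Yi_cc)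
    qed (simp add: atLeast0LessThan)
    finally show ?thesis by (simp add: prbUNIV)
  qed
  have N: "real (card ((\<lambda>_. ()) ` (S \<inter> W))) \<le> 1"
  proof -
    have "card ((\<lambda>_. ()) ` (S \<inter> W)) \<le> card {()}" by (rule card_mono) auto
    thus ?thesis by simp
  qed
  have "(\<Sum>i\<in>{0..<m}. \<Sum>w\<in>S. qW P W w * ln (Qev P W {w'. Yi i w' = Yi i w \<and> (\<lambda>_. ()) w' = (\<lambda>_. ()) w \<and> (\<lambda>_. ()) w' = (\<lambda>_. ()) w}
          / (prb P {w'. Yi i w' = Yi i w \<and> (\<lambda>i _. ()) i w' = (\<lambda>i _. ()) i w} / prb P {w'. (\<lambda>i _. ()) i w' = (\<lambda>i _. ()) i w} * Qev P W {w'. (\<lambda>_. ()) w' = (\<lambda>_. ()) w \<and> (\<lambda>_. ()) w' = (\<lambda>_. ()) w})))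
       \<le> ln (1 / prb P W)"
    by (rule raz[OF finP _ pW N]) (use CI in auto)
  moreover have "Qev P W UNIV = 1" using pW by (simp add: Qev_def)
  ultimately show ?thesis by (simp add: prbUNIV)
qed

end


context cor begin

definition "Bset = {a. length a = k \<and> (\<forall>t<k. a ! t \<in> As t)}"
definition "Nz = real ((\<Prod>t<k. card (As t)) ^ (n - m))"

lemma ansv_in:
  assumes w: "w \<in> S" and j: "j < n"
  shows "ansv k n f (fst w) j \<in> Bset"
proof -
  have "f t (map (\<lambda>j. fst w j ! t) [0..<n]) ! j \<in> As t" if t: "t < k" for t
  proof -
    let ?qs = "map (\<lambda>j. fst w j ! t) [0..<n]"
    have "set ?qs \<subseteq> Xs t"
    proof
      fix x assume "x \<in> set ?qs"
      then obtain j' where j': "j' < n" "x = fst w j' ! t" by auto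
      have "fst w j' \<in> set_pmf mu" using suppX[OF w j'(1)] .
      thus "x \<in> Xs t" using mu_supp t j' by auto
    qed
    hence "length (f t ?qs) = n \<and> set (f t ?qs) \<subseteq> As t" using strat t by (simp add: strategy_def)
    thus ?thesis using j by (auto dest!: nth_mem)
  qed
  thus ?thesis by (simp add: Bset_def ansv_def)
qed

lemma finBset: "finite Bset"
proof (rule finite_subset)
  show "Bset \<subseteq> {a. set a \<subseteq> (\<Union>t<k. As t) \<and> length a = k}"
  proof
    fix a assume "a \<in> Bset"
    hence a: "length a = k" "\<forall>t<k. a ! t \<in> As t" by (auto simp: Bset_def)
    have "set a \<subseteq> (\<Union>t<k. As t)"
    proof
      fix x assume "x \<in> set a"
      then obtain t where "t < length a" "a ! t = x" by (auto simp: in_set_conv_nth)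
      thus "x \<in> (\<Union>t<k. As t)" using a by auto
    qed
    thus "a \<in> {a. set a \<subseteq> (\<Union>t<k. As t) \<and> length a = k}" using a by simp
  qed
  show "finite {a. set a \<subseteq> (\<Union>t<k. As t) \<and> length a = k}"
    using finAs by (intro finite_lists_length_eq) auto
qed

lemma cardBset: "card Bset \<le> (\<Prod>t<k. card (As t))"
proof -
  have "card Bset \<le> card (PiE {0..<k} As)"
  proof (rule card_inj_on_le)
    show "inj_on (\<lambda>a. restrict (\<lambda>t. a ! t) {0..<k}) Bset"
    proof (rule inj_onI)
      fix a b assume a: "a \<in> Bset" and b: "b \<in> Bset"
        and eq: "restrict (\<lambda>t. a ! t) {0..<k} = restrict (\<lambda>t. b ! t) {0..<k}"
      have "a ! t = b ! t" if "t < k" for t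
        using fun_cong[OF eq, of t] that by simp
      thus "a = b" using a b by (intro nth_equalityI) (auto simp: Bset_def)
    qed
    show "(\<lambda>a. restrict (\<lambda>t. a ! t) {0..<k}) ` Bset \<subseteq> PiE {0..<k} As"
      by (auto simp: Bset_def)
    show "finite (PiE {0..<k} As)" using finAs by (intro finite_PiE) auto
  qed
  also have "\<dots> = (\<Prod>t\<in>{0..<k}. card (As t))" by (simp add: card_PiE)
  finally show ?thesis by (simp add: atLeast0LessThan)
qed

lemma cardZ: "real (card (Zf ` (S \<inter> W))) \<le> Nz"
proof -
  have "Zf ` (S \<inter> W) \<subseteq> {zs. set zs \<subseteq> Bset \<and> length zs = n - m}"
  proof
    fix zs assume "zs \<in> Zf ` (S \<inter> W)"
    then obtain w where w: "w \<in> S" "zs = Zf w" by auto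
    have "set zs \<subseteq> Bset" using ansv_in[OF w(1)] w(2) by (auto simp: Zv_def)
    moreover have "length zs = n - m" using w(2) by (simp add: Zv_def)
    ultimately show "zs \<in> {zs. set zs \<subseteq> Bset \<and> length zs = n - m}" by simp
  qed
  hence "card (Zf ` (S \<inter> W)) \<le> card {zs. set zs \<subseteq> Bset \<and> length zs = n - m}"
    using finBset by (intro card_mono) (auto intro: finite_lists_length_eq)
  also have "\<dots> = card Bset ^ (n - m)" using finBset by (simp add: card_lists_length_eq)
  also have "\<dots> \<le> (\<Prod>t<k. card (As t)) ^ (n - m)" using cardBset by (rule power_mono) simp
  finally show ?thesis unfolding Nz_def by linarith
qed

lemma razK:
  "(\<Sum>i\<in>{0..<m}. \<Sum>w\<in>S. qW P W w * ln (Qev P W {w'. Yi i w' = Yi i w \<and> Gf w' = Gf w \<and> Zf w' = Zf w}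
          / (prb P {w'. Yi i w' = Yi i w \<and> Oi i w' = Oi i w} / prb P {w'. Oi i w' = Oi i w} * Qev P W {w'. Gf w' = Gf w \<and> Zf w' = Zf w})))
     \<le> ln (Nz / prb P W)"
proof (rule raz[OF finP _ pW cardZ])
  show "finite {0..<m}" by simp
  show "\<And>i w w'. i \<in> {0..<m} \<Longrightarrow> Gf w = Gf w' \<Longrightarrow> Oi i w = Oi i w'"
    using mn by (auto simp: map_eq_conv)
  fix w assume w: "w \<in> S"
  define E1 where "E1 j = {c. (j < m \<longrightarrow> yv k Xb c = Yi j w) \<and> om k m Xb j c = Oi j w}" for j
  define E2 where "E2 j = {c. om k m Xb j c = Oi j w}" for j
  define a where "a j = prb (cp k m mu j) (E1 j)" for j
  define b where "b j = prb (cp k m mu j) (E2 j)" for j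
  have ev1: "{w'. (\<forall>i\<in>{0..<m}. Yi i w' = Yi i w) \<and> Gf w' = Gf w} = {w'. \<forall>j<n. cc j w' \<in> E1 j}"
    using mn by (auto simp: E1_def Yi_cc Oi_cc[symmetric] map_eq_conv)
  have ev2: "{w'. Gf w' = Gf w} = {w'. \<forall>j<n. cc j w' \<in> E2 j}"
    by (auto simp: E2_def Oi_cc[symmetric] map_eq_conv)
  have ev3: "{w'. Yi i w' = Yi i w \<and> Oi i w' = Oi i w} = {w'. cc i w' \<in> E1 i}" if "i < m" for i
    using that by (auto simp: E1_def Yi_cc Oi_cc[symmetric])
  have ev4: "{w'. Oi i w' = Oi i w} = {w'. cc i w' \<in> E2 i}" for i
    by (auto simp: E2_def Oi_cc[symmetric])
  have bpos: "b j > 0" if "j < n" for j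
  proof -
    have "prb P {w'. Oi j w' = Oi j w} > 0" using w by (intro prb_pos) auto
    thus ?thesis unfolding ev4 b_def using singleP[OF that] by simp
  qed
  have ab: "a j = (if j < m then b j * (a j / b j) else b j)" if "j < n" for j
    using bpos[OF that] by (auto simp: a_def b_def E1_def E2_def)
  have "prb P {w'. (\<forall>i\<in>{0..<m}. Yi i w' = Yi i w) \<and> Gf w' = Gf w} = (\<Prod>j<n. a j)"
    unfolding ev1 a_def by (rule prodP)
  also have "\<dots> = (\<Prod>j<n. b j * (if j < m then a j / b j else 1))"
  proof (rule prod.cong[OF refl])
    fix j assume "j \<in> {..<n}"
    hence j: "j < n" by simp
    show "a j = b j * (if j < m then a j / b j else 1)"
      using ab[OF j] by (cases "j < m") simp_all
  qed
  also have "\<dots> = (\<Prod>j<n. b j) * (\<Prod>j<n. if j < m then a j / b j else 1)"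
    by (rule prod.distrib)
  also have "(\<Prod>j<n. if j < m then a j / b j else 1) = (\<Prod>j<m. a j / b j)"
    using mn by (intro prod_prefix) simp
  also have "(\<Prod>j<n. b j) = prb P {w'. Gf w' = Gf w}"
    unfolding ev2 b_def by (rule prodP[symmetric])
  also have "(\<Prod>j<m. a j / b j) = (\<Prod>i\<in>{0..<m}. prb P {w'. Yi i w' = Yi i w \<and> Oi i w' = Oi i w} / prb P {w'. Oi i w' = Oi i w})"
  proof (rule prod.cong)
    fix i assume i: "i \<in> {0..<m}"
    hence "i < n" "i < m" using mn by auto
    thus "a i / b i = prb P {w'. Yi i w' = Yi i w \<and> Oi i w' = Oi i w} / prb P {w'. Oi i w' = Oi i w}"
      unfolding ev3[OF \<open>i < m\<close>] ev4 a_def b_def using singleP by simp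
  qed (simp add: atLeast0LessThan)
  finally show "prb P {w'. (\<forall>i\<in>{0..<m}. Yi i w' = Yi i w) \<and> Gf w' = Gf w}
         = prb P {w'. Gf w' = Gf w} * (\<Prod>i\<in>{0..<m}. prb P {w'. Yi i w' = Yi i w \<and> Oi i w' = Oi i w} / prb P {w'. Oi i w' = Oi i w})" .
qed

end


lemma kl_group:
  assumes fin: "finite (set_pmf P)" and T: "finite T" "V ` set_pmf P \<subseteq> T"
  shows "(\<Sum>w\<in>set_pmf P. qW P W w * (\<lambda>v. ln (Qev P W {w. V w = v} / Ref v)) (V w))
       = (\<Sum>v\<in>T. Qev P W {w. V w = v} * ln (Qev P W {w. V w = v} / Ref v))"
proof -
  have "(\<Sum>w\<in>set_pmf P. qW P W w * (\<lambda>v. ln (Qev P W {w. V w = v} / Ref v)) (V w))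
      = (\<Sum>v\<in>V ` set_pmf P. Qev P W {w. V w = v} * ln (Qev P W {w. V w = v} / Ref v))"
    by (rule group_q[OF fin])
  also have "\<dots> = (\<Sum>v\<in>T. Qev P W {w. V w = v} * ln (Qev P W {w. V w = v} / Ref v))"
  proof (rule sum.mono_neutral_left[OF T(1) T(2)])
    show "\<forall>v\<in>T - V ` set_pmf P. Qev P W {w. V w = v} * ln (Qev P W {w. V w = v} / Ref v) = 0"
    proof
      fix v assume "v \<in> T - V ` set_pmf P"
      hence "set_pmf P \<inter> ({w. V w = v} \<inter> W) = {}" by auto
      hence "Qev P W {w. V w = v} = 0" by (simp add: Qev_def measure_pmf_zero_iff)
      thus "Qev P W {w. V w = v} * ln (Qev P W {w. V w = v} / Ref v) = 0" by simp
    qed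
  qed
  finally show ?thesis .
qed

lemma pinsker_Y:
  assumes fin: "finite (set_pmf P)" and pW: "prb P W > 0"
  shows "(\<Sum>y\<in>Y ` set_pmf P. \<bar>prb P {w. Y w = y} - prb P {w. w \<in> W \<and> Y w = y} / prb P W\<bar>)^2
       \<le> 2 * (\<Sum>w\<in>set_pmf P. qW P W w * ln (Qev P W {w'. Y w' = Y w} / prb P {w'. Y w' = Y w}))"
proof -
  let ?T = "Y ` set_pmf P"
  define p where "p y = Qev P W {w. Y w = y}" for y
  define q where "q y = prb P {w. Y w = y}" for y
  have finT: "finite ?T" using fin by simp
  have pe: "prb P {w. w \<in> W \<and> Y w = y} / prb P W = p y" for y
    unfolding p_def Qev_def by (rule arg_cong[where f="\<lambda>x. prb P x / prb P W"]) auto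
  have "(\<Sum>w\<in>set_pmf P. qW P W w * ln (Qev P W {w'. Y w' = Y w} / prb P {w'. Y w' = Y w}))
      = (\<Sum>w\<in>set_pmf P. qW P W w * (\<lambda>v. ln (Qev P W {w. Y w = v} / q v)) (Y w))"
    by (simp add: q_def)
  also have "\<dots> = (\<Sum>y\<in>?T. p y * ln (p y / q y))"
    unfolding p_def by (rule kl_group[OF fin finT]) simp
  finally have KL: "(\<Sum>w\<in>set_pmf P. qW P W w * ln (Qev P W {w'. Y w' = Y w} / prb P {w'. Y w' = Y w})) = (\<Sum>y\<in>?T. p y * ln (p y / q y))" .
  have p1: "(\<Sum>y\<in>?T. p y) = 1"
  proof -
    have "(\<Sum>y\<in>?T. Qev P W {w. Y w = y \<and> w \<in> UNIV}) = Qev P W UNIV"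
      using partition_Qev[OF fin finT, of Y W UNIV] by simp
    thus ?thesis using pW by (simp add: p_def Qev_def)
  qed
  have q1: "(\<Sum>y\<in>?T. q y) = 1"
    using partition_sum[OF fin finT, of Y UNIV] by (simp add: q_def measure_pmf.prob_space)
  have "(\<Sum>y\<in>?T. \<bar>p y - q y\<bar>)^2 \<le> 2 * (\<Sum>y\<in>?T. p y * ln (p y / q y))"
  proof (rule pinsker[OF finT])
    show "\<And>v. v \<in> ?T \<Longrightarrow> 0 \<le> p v" by (simp add: p_def Qev_nonneg)
    show "\<And>v. v \<in> ?T \<Longrightarrow> 0 \<le> q v" by (simp add: q_def)
    show "(\<Sum>v\<in>?T. p v) = 1" by (rule p1)
    show "(\<Sum>v\<in>?T. q v) \<le> 1" using q1 by simp
    show "\<And>v. v \<in> ?T \<Longrightarrow> 0 < p v \<Longrightarrow> 0 < q v"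
      by (auto simp: q_def intro!: prb_pos)
  qed
  moreover have "(\<Sum>y\<in>?T. \<bar>prb P {w. Y w = y} - prb P {w. w \<in> W \<and> Y w = y} / prb P W\<bar>) = (\<Sum>y\<in>?T. \<bar>p y - q y\<bar>)"
    by (intro sum.cong refl) (simp add: pe q_def abs_minus_commute)
  ultimately show ?thesis using KL by simp
qed


lemma nth_omit:
  assumes "length a = k" "t < k" "l < k - 1"
  shows "omit t a ! l = (if l < t then a ! l else a ! Suc l)"
  using assms by (auto simp: omit_def nth_append min_def)

lemma length_omit: "length a = k \<Longrightarrow> t < k \<Longrightarrow> length (omit t a) = k - 1"
  by (simp add: omit_def)

lemma omit_eq:
  assumes a: "length a = k" and b: "length b = k" and t: "t < k"
  shows "omit t a = omit t b \<longleftrightarrow> (\<forall>j<k. j \<noteq> t \<longrightarrow> a ! j = b ! j)"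
proof
  assume eq: "omit t a = omit t b"
  show "\<forall>j<k. j \<noteq> t \<longrightarrow> a ! j = b ! j"
  proof (intro allI impI)
    fix j assume j: "j < k" "j \<noteq> t"
    show "a ! j = b ! j"
    proof (cases "j < t")
      case True
      hence "j < k - 1" using t by linarith
      thus ?thesis using eq nth_omit[OF a t, of j] nth_omit[OF b t, of j] True by simp
    next
      case False
      hence "j - 1 < k - 1" "\<not> j - 1 < t" "Suc (j - 1) = j" using j by auto
      thus ?thesis using eq nth_omit[OF a t, of "j - 1"] nth_omit[OF b t, of "j - 1"] by simp
    qed
  qed
next
  assume H: "\<forall>j<k. j \<noteq> t \<longrightarrow> a ! j = b ! j"
  show "omit t a = omit t b"
  proof (rule nth_equalityI)
    show "length (omit t a) = length (omit t b)" using a b t by (simp add: length_omit)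
    fix l assume "l < length (omit t a)"
    hence l: "l < k - 1" using a t by (simp add: length_omit)
    show "omit t a ! l = omit t b ! l"
      using nth_omit[OF a t l] nth_omit[OF b t l] H l by auto
  qed
qed


context cor begin

definition ot :: "nat \<Rightarrow> 'q option list \<Rightarrow> (nat set \<times> (nat \<Rightarrow> 'q option option)) + 'q list" where
  "ot t y = Inl ({0..<k} - {t}, (\<lambda>t'. if t' \<in> {0..<k} - {t} then Some (y ! t') else None))"

lemma len_Yi: "length (Yi i w) = k"
  by (simp add: Yv_def)

lemma Oi_ot:
  assumes "i < m"
  shows "Oi i w = ot t y \<longleftrightarrow> snd w i = {0..<k} - {t} \<and> (\<forall>t'\<in>{0..<k} - {t}. Yi i w ! t' = y ! t')"
proof -
  have "Oi i w = Inl (snd w i, (\<lambda>t'. if t' \<in> snd w i then Some (Yi i w ! t') else None))"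
    using assms by (simp add: Om_def)
  moreover have "(Inl (snd w i, (\<lambda>t'. if t' \<in> snd w i then Some (Yi i w ! t') else None)) = ot t y)
      \<longleftrightarrow> snd w i = {0..<k} - {t} \<and> (\<forall>t'\<in>{0..<k} - {t}. Yi i w ! t' = y ! t')"
  proof
    assume H: "Inl (snd w i, (\<lambda>t'. if t' \<in> snd w i then Some (Yi i w ! t') else None)) = ot t y"
    hence d: "snd w i = {0..<k} - {t}" by (simp add: ot_def)
    have PE: "(snd w i, (\<lambda>t'. if t' \<in> snd w i then Some (Yi i w ! t') else None)) = ({0..<k} - {t}, (\<lambda>t'. if t' \<in> {0..<k} - {t} then Some (y ! t') else None))"
      using H unfolding ot_def by (rule Inl_inject)
    have fe: "(\<lambda>t'. if t' \<in> snd w i then Some (Yi i w ! t') else None) = (\<lambda>t'. if t' \<in> {0..<k} - {t} then Some (y ! t') else None)"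
      using arg_cong[OF PE, of snd] by (simp only: snd_conv)
    have "Yi i w ! t' = y ! t'" if "t' \<in> {0..<k} - {t}" for t'
      using fun_cong[OF fe, of t'] that d by simp
    thus "snd w i = {0..<k} - {t} \<and> (\<forall>t'\<in>{0..<k} - {t}. Yi i w ! t' = y ! t')" using d by blast
  next
    assume H: "snd w i = {0..<k} - {t} \<and> (\<forall>t'\<in>{0..<k} - {t}. Yi i w ! t' = y ! t')"
    have "(\<lambda>t'. if t' \<in> snd w i then Some (Yi i w ! t') else None) = (\<lambda>t'. if t' \<in> {0..<k} - {t} then Some (y ! t') else None)"
      using H by (intro ext) auto
    thus "Inl (snd w i, (\<lambda>t'. if t' \<in> snd w i then Some (Yi i w ! t') else None)) = ot t y"
      using H by (simp add: ot_def)
  qed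
  ultimately show ?thesis by simp
qed

lemma Oi_ot_omit:
  assumes "i < m" "t < k" "length y = k"
  shows "Oi i w = ot t y \<longleftrightarrow> snd w i = {0..<k} - {t} \<and> omit t (Yi i w) = omit t y"
proof -
  have "(\<forall>t'\<in>{0..<k} - {t}. Yi i w ! t' = y ! t') \<longleftrightarrow> omit t (Yi i w) = omit t y"
    using omit_eq[OF len_Yi[where i=i and w=w] assms(3) assms(2)] by auto
  thus ?thesis using Oi_ot[OF assms(1)] by simp
qed

lemma Ominus_upd: "Om_minus k m n Xb X (D(i := d')) i = Om_minus k m n Xb X D i"
  by (simp add: Om_minus_def Om_def)

lemma indepE:
  assumes "\<And>w w'. fst w = fst w' \<Longrightarrow> Om_minus k m n Xb (fst w) (snd w) i = Om_minus k m n Xb (fst w') (snd w') i \<Longrightarrow> w \<in> E \<longleftrightarrow> w' \<in> E"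
  shows "(X, D) \<in> E \<longleftrightarrow> (X, D(i := d')) \<in> E"
  using assms[of "(X, D)" "(X, D(i := d'))"] by (simp add: Ominus_upd)

lemma GZ_eq:
  assumes "i < n"
  shows "(Gf w' = Gf w \<and> Zf w' = Zf w) \<longleftrightarrow> (Oi i w' = Oi i w \<and> Ri i w' = Ri i w)"
proof -
  have "Gf w' = Gf w \<longleftrightarrow> (\<forall>j<n. Om k m Xb (fst w') (snd w') j = Om k m Xb (fst w) (snd w) j)"
    by (auto simp: map_eq_conv)
  moreover have "Om_minus k m n Xb (fst w') (snd w') i = Om_minus k m n Xb (fst w) (snd w) i
      \<longleftrightarrow> (\<forall>j<n. j \<noteq> i \<longrightarrow> Om k m Xb (fst w') (snd w') j = Om k m Xb (fst w) (snd w) j)"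
    by (auto simp: Om_minus_def map_eq_conv)
  ultimately show ?thesis using assms by auto
qed

lemma dt_in: "t < k \<Longrightarrow> {0..<k} - {t} \<in> Dset k"
  using Dset_eq[OF k1] by auto

lemma D_indep_k:
  assumes i: "i < m" and t: "t < k"
    and E: "\<And>w w'. fst w = fst w' \<Longrightarrow> Om_minus k m n Xb (fst w) (snd w) i = Om_minus k m n Xb (fst w') (snd w') i \<Longrightarrow> w \<in> E \<longleftrightarrow> w' \<in> E"
  shows "prb P {w. snd w i = {0..<k} - {t} \<and> w \<in> E} = prb P E / real k"
proof -
  have "prb P {w. snd w i = {0..<k} - {t} \<and> w \<in> E} = prb (pmf_of_set (Dset k)) {{0..<k} - {t}} * prb P E"
    by (rule D_indep[OF i fin_mu]) (rule indepE[OF E])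
  thus ?thesis using prb_UD[OF k1 dt_in[OF t]] by simp
qed

end


context cor begin

lemma mid_bound:
  assumes i: "i < m"
  shows "(\<Sum>t<k. \<Sum>y\<in>(\<lambda>w. Yi i w) ` S. \<Sum>r\<in>(\<lambda>w. Ri i w) ` S.
     \<bar>prb P {w. Ri i w = r \<and> w \<in> W \<and> Yi i w = y} / prb P W
      - prb P {w. Yi i w = y} / prb P {w. omit t (Yi i w) = omit t y} * (prb P {w. Ri i w = r \<and> w \<in> W \<and> omit t (Yi i w) = omit t y} / prb P W)\<bar>)
   \<le> real k * sqrt (2 * (\<Sum>w\<in>S. qW P W w * ln (Qev P W {w'. Yi i w' = Yi i w \<and> Gf w' = Gf w \<and> Zf w' = Zf w}
          / (prb P {w'. Yi i w' = Yi i w \<and> Oi i w' = Oi i w} / prb P {w'. Oi i w' = Oi i w} * Qev P W {w'. Gf w' = Gf w \<and> Zf w' = Zf w}))))"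
proof -
  have i_n: "i < n" using i mn by simp
  define Y where "Y (w :: (nat \<Rightarrow> 'q list) \<times> (nat \<Rightarrow> nat set)) = Yi i w" for w
  define Ob where "Ob w = Oi i w" for w
  define R where "R (w :: (nat \<Rightarrow> 'q list) \<times> (nat \<Rightarrow> nat set)) = Ri i w" for w
  define V where "V w = (Y w, Ob w, R w)" for w
  define pp where "pp v = Qev P W {w. V w = v}" for v
  define qq where "qq v = prb P {w. Y w = fst v \<and> Ob w = fst (snd v)} / prb P {w. Ob w = fst (snd v)}
        * Qev P W {w. Ob w = fst (snd v) \<and> R w = snd (snd v)}" for v
  define Ys where "Ys = Y ` S"
  define Rs where "Rs = R ` S"
  define Os where "Os = Ob ` S \<union> (\<lambda>(t, y). ot t y) ` ({0..<k} \<times> Ys)"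
  define T where "T = Ys \<times> (Os \<times> Rs)"
  define K where "K = (\<Sum>w\<in>S. qW P W w * ln (Qev P W {w'. Yi i w' = Yi i w \<and> Gf w' = Gf w \<and> Zf w' = Zf w}
          / (prb P {w'. Yi i w' = Yi i w \<and> Oi i w' = Oi i w} / prb P {w'. Oi i w' = Oi i w} * Qev P W {w'. Gf w' = Gf w \<and> Zf w' = Zf w})))"
  have finS: "finite S" by (rule finP)
  have finYs: "finite Ys" and finRs: "finite Rs" using finS by (auto simp: Ys_def Rs_def)
  have finOs: "finite Os" using finS finYs by (auto simp: Os_def)
  have finT: "finite T" using finYs finRs finOs by (simp add: T_def)
  have VT: "V ` S \<subseteq> T" by (auto simp: V_def T_def Ys_def Os_def Rs_def)
  have pW': "prb P W > 0" by (rule pW)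
  have KV: "K = (\<Sum>w\<in>S. qW P W w * (\<lambda>v. ln (Qev P W {w. V w = v} / qq v)) (V w))"
    unfolding K_def
  proof (rule sum.cong[OF refl])
    fix w assume w: "w \<in> S"
    have e1: "{w'. Yi i w' = Yi i w \<and> Gf w' = Gf w \<and> Zf w' = Zf w} = {w'. V w' = V w}"
    proof -
      have "(Yi i w' = Yi i w \<and> Gf w' = Gf w \<and> Zf w' = Zf w) \<longleftrightarrow> V w' = V w" for w'
        using GZ_eq[OF i_n, where w'=w' and w=w] by (auto simp: V_def Y_def Ob_def R_def)
      thus ?thesis by simp
    qed
    have e2: "{w'. Gf w' = Gf w \<and> Zf w' = Zf w} = {w'. Ob w' = Ob w \<and> R w' = R w}"
    proof -
      have "(Gf w' = Gf w \<and> Zf w' = Zf w) \<longleftrightarrow> (Ob w' = Ob w \<and> R w' = R w)" for w'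
        using GZ_eq[OF i_n, where w'=w' and w=w] by (auto simp: Ob_def R_def)
      thus ?thesis by simp
    qed
    show "qW P W w * ln (Qev P W {w'. Yi i w' = Yi i w \<and> Gf w' = Gf w \<and> Zf w' = Zf w}
          / (prb P {w'. Yi i w' = Yi i w \<and> Oi i w' = Oi i w} / prb P {w'. Oi i w' = Oi i w} * Qev P W {w'. Gf w' = Gf w \<and> Zf w' = Zf w}))
        = qW P W w * (\<lambda>v. ln (Qev P W {w. V w = v} / qq v)) (V w)"
      unfolding e1 e2 by (simp add: qq_def V_def Y_def Ob_def R_def)
  qed
  have KT: "K = (\<Sum>v\<in>T. pp v * ln (pp v / qq v))"
    unfolding KV pp_def by (rule kl_group[OF finP finT VT])
  have pp0: "pp v \<ge> 0" for v by (simp add: pp_def Qev_nonneg)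
  have qq0: "qq v \<ge> 0" for v by (simp add: qq_def Qev_nonneg)
  have pp1: "(\<Sum>v\<in>T. pp v) = 1"
  proof -
    have "(\<Sum>v\<in>T. Qev P W {w. V w = v \<and> w \<in> UNIV}) = Qev P W UNIV"
      by (rule partition_Qev[OF finP finT VT])
    thus ?thesis using pW by (simp add: pp_def Qev_def)
  qed
  have qq1: "(\<Sum>v\<in>T. qq v) \<le> 1"
  proof -
    have "(\<Sum>v\<in>T. qq v) = (\<Sum>y\<in>Ys. \<Sum>pr2\<in>Os \<times> Rs. qq (y, pr2))"
      unfolding T_def by (rule sum.cartesian_product')
    also have "\<dots> = (\<Sum>pr2\<in>Os \<times> Rs. \<Sum>y\<in>Ys. qq (y, pr2))" by (rule sum.swap)
    also have "\<dots> \<le> (\<Sum>pr2\<in>Os \<times> Rs. Qev P W {w. (Ob w, R w) = pr2 \<and> w \<in> UNIV})"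
    proof (rule sum_mono)
      fix pr2 assume "pr2 \<in> Os \<times> Rs"
      obtain ox r where pr2: "pr2 = (ox, r)" by (cases pr2)
      have s: "(\<Sum>y\<in>Ys. prb P {w. Y w = y \<and> w \<in> {w. Ob w = ox}}) \<le> prb P {w. Ob w = ox}"
        by (rule partition_sum_le[OF finP finYs])
      have "(\<Sum>y\<in>Ys. qq (y, pr2)) = (\<Sum>y\<in>Ys. prb P {w. Y w = y \<and> w \<in> {w. Ob w = ox}}) / prb P {w. Ob w = ox} * Qev P W {w. Ob w = ox \<and> R w = r}"
        by (simp add: qq_def pr2 sum_divide_distrib sum_distrib_right)
      also have "\<dots> \<le> 1 * Qev P W {w. Ob w = ox \<and> R w = r}"
      proof (rule mult_right_mono)
        show "(\<Sum>y\<in>Ys. prb P {w. Y w = y \<and> w \<in> {w. Ob w = ox}}) / prb P {w. Ob w = ox} \<le> 1"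
        proof (cases "prb P {w. Ob w = ox} = 0")
          case False
          hence "prb P {w. Ob w = ox} > 0" by (simp add: less_le)
          thus ?thesis using s by (subst divide_le_eq_1_pos) auto
        qed simp
      qed (simp add: Qev_nonneg)
      also have "\<dots> = Qev P W {w. (Ob w, R w) = pr2 \<and> w \<in> UNIV}" by (simp add: pr2)
      finally show "(\<Sum>y\<in>Ys. qq (y, pr2)) \<le> Qev P W {w. (Ob w, R w) = pr2 \<and> w \<in> UNIV}" .
    qed
    also have "\<dots> = Qev P W UNIV"
      using finOs finRs by (intro partition_Qev[OF finP]) (auto simp: Os_def Rs_def)
    also have "\<dots> = 1" using pW by (simp add: Qev_def)
    finally show ?thesis .
  qed
  have pos: "qq v > 0" if "v \<in> T" "pp v > 0" for v
  proof -
    have "prb P ({w. V w = v} \<inter> W) \<noteq> 0" using that(2) by (auto simp: pp_def Qev_def)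
    hence "set_pmf P \<inter> ({w. V w = v} \<inter> W) \<noteq> {}" by (simp add: measure_pmf_zero_iff)
    then obtain w where w: "w \<in> S" "V w = v" "w \<in> W" by auto
    have "prb P {w'. Y w' = fst v \<and> Ob w' = fst (snd v)} > 0" using w by (intro prb_pos[OF w(1)]) (auto simp: V_def)
    moreover have "prb P {w'. Ob w' = fst (snd v)} > 0" using w by (intro prb_pos[OF w(1)]) (auto simp: V_def)
    moreover have "Qev P W {w'. Ob w' = fst (snd v) \<and> R w' = snd (snd v)} > 0"
      using w pW by (intro Qev_pos[OF w(1)]) (auto simp: V_def)
    ultimately show ?thesis by (simp add: qq_def)
  qed
  have PIN: "(\<Sum>v\<in>T. \<bar>pp v - qq v\<bar>)^2 \<le> 2 * K"
    unfolding KT using pinsker[OF finT _ _ pp1 qq1 pos] pp0 qq0 by auto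
  hence PIN': "(\<Sum>v\<in>T. \<bar>pp v - qq v\<bar>) \<le> sqrt (2 * K)"
    by (rule real_le_rsqrt)
  define \<phi> where "\<phi> x = (fst (snd x), ot (fst x) (fst (snd x)), snd (snd x))" for x :: "nat \<times> 'q option list \<times> ('a list list \<times> ((nat set \<times> (nat \<Rightarrow> 'q option option) + 'q list) list))"
  have inj: "inj_on \<phi> ({0..<k} \<times> (Ys \<times> Rs))"
  proof (rule inj_onI)
    fix x x' assume x: "x \<in> {0..<k} \<times> (Ys \<times> Rs)" and x': "x' \<in> {0..<k} \<times> (Ys \<times> Rs)" and eq: "\<phi> x = \<phi> x'"
    from eq have "fst (snd (\<phi> x)) = fst (snd (\<phi> x'))" by simp
    hence "ot (fst x) (fst (snd x)) = ot (fst x') (fst (snd x'))" by (simp only: \<phi>_def fst_conv snd_conv)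
    hence "{0..<k} - {fst x} = {0..<k} - {fst x'}" by (simp add: ot_def)
    hence "fst x = fst x'" using inj_onD[OF Dset_inj] x x' by auto
    thus "x = x'" using eq by (auto simp: \<phi>_def prod_eq_iff)
  qed
  have img: "\<phi> ` ({0..<k} \<times> (Ys \<times> Rs)) \<subseteq> T"
    by (auto simp: \<phi>_def T_def Os_def)
  have E_sum: "(\<Sum>x\<in>{0..<k} \<times> (Ys \<times> Rs). \<bar>pp (\<phi> x) - qq (\<phi> x)\<bar>) \<le> (\<Sum>v\<in>T. \<bar>pp v - qq v\<bar>)"
  proof -
    have "(\<Sum>x\<in>{0..<k} \<times> (Ys \<times> Rs). \<bar>pp (\<phi> x) - qq (\<phi> x)\<bar>) = (\<Sum>v\<in>\<phi> ` ({0..<k} \<times> (Ys \<times> Rs)). \<bar>pp v - qq v\<bar>)"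
      by (simp add: sum.reindex[OF inj])
    also have "\<dots> \<le> (\<Sum>v\<in>T. \<bar>pp v - qq v\<bar>)"
      by (intro sum_mono2[OF finT img]) auto
    finally show ?thesis .
  qed
  have ident: "\<bar>prb P {w. R w = r \<and> w \<in> W \<and> Y w = y} / prb P W
      - prb P {w. Y w = y} / prb P {w. omit t (Y w) = omit t y} * (prb P {w. R w = r \<and> w \<in> W \<and> omit t (Y w) = omit t y} / prb P W)\<bar>
      = real k * \<bar>pp (\<phi> (t, y, r)) - qq (\<phi> (t, y, r))\<bar>" if t: "t < k" and y: "y \<in> Ys" for t y r
  proof -
    have ly: "length y = k" using y by (auto simp: Ys_def Y_def Yv_def)
    have kp: "real k > 0" using k1 by simp
    have OtY: "Ob w = ot t y \<longleftrightarrow> snd w i = {0..<k} - {t} \<and> omit t (Y w) = omit t y" for w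
      unfolding Ob_def Y_def by (rule Oi_ot_omit[OF i t ly])
    have DR1: "prb P {w. snd w i = {0..<k} - {t} \<and> w \<in> {w. R w = r \<and> w \<in> W \<and> Y w = y}} = prb P {w. R w = r \<and> w \<in> W \<and> Y w = y} / real k"
      by (rule D_indep_k[OF i t]) (auto simp: R_def Y_def Wev_def)
    have DR2: "prb P {w. snd w i = {0..<k} - {t} \<and> w \<in> {w. R w = r \<and> w \<in> W \<and> omit t (Y w) = omit t y}} = prb P {w. R w = r \<and> w \<in> W \<and> omit t (Y w) = omit t y} / real k"
      by (rule D_indep_k[OF i t]) (auto simp: R_def Y_def Wev_def)
    have "{w. V w = \<phi> (t, y, r)} \<inter> W = {w. snd w i = {0..<k} - {t} \<and> w \<in> {w. R w = r \<and> w \<in> W \<and> Y w = y}}"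
      by (auto simp: V_def \<phi>_def OtY)
    hence ppv: "pp (\<phi> (t, y, r)) = (prb P {w. R w = r \<and> w \<in> W \<and> Y w = y} / real k) / prb P W"
      unfolding pp_def Qev_def using DR1 by simp
    have a1: "{w. Y w = y \<and> Ob w = ot t y} = {w. snd w i = {0..<k} - {t} \<and> w \<in> {w. Y w = y}}"
      by (auto simp: OtY)
    have a2: "{w. Ob w = ot t y} = {w. snd w i = {0..<k} - {t} \<and> w \<in> {w. omit t (Y w) = omit t y}}"
      by (auto simp: OtY)
    have a3: "{w. Ob w = ot t y \<and> R w = r} \<inter> W = {w. snd w i = {0..<k} - {t} \<and> w \<in> {w. R w = r \<and> w \<in> W \<and> omit t (Y w) = omit t y}}"
      by (auto simp: OtY)
    have q1: "prb P {w. Y w = y \<and> Ob w = ot t y} = prb P {w. Y w = y} / real k"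
      unfolding a1 by (rule D_indep_k[OF i t]) (auto simp: Y_def)
    have q2: "prb P {w. Ob w = ot t y} = prb P {w. omit t (Y w) = omit t y} / real k"
      unfolding a2 by (rule D_indep_k[OF i t]) (auto simp: Y_def)
    have q3: "Qev P W {w. Ob w = ot t y \<and> R w = r} = (prb P {w. R w = r \<and> w \<in> W \<and> omit t (Y w) = omit t y} / real k) / prb P W"
      unfolding Qev_def a3 using DR2 by simp
    have qqv: "qq (\<phi> (t, y, r)) = (prb P {w. Y w = y} / real k) / (prb P {w. omit t (Y w) = omit t y} / real k)
        * ((prb P {w. R w = r \<and> w \<in> W \<and> omit t (Y w) = omit t y} / real k) / prb P W)"
      using q1 q2 q3 by (simp add: qq_def \<phi>_def)
    have qqv': "qq (\<phi> (t, y, r)) = (prb P {w. Y w = y} / prb P {w. omit t (Y w) = omit t y}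
        * (prb P {w. R w = r \<and> w \<in> W \<and> omit t (Y w) = omit t y} / prb P W)) / real k"
      unfolding qqv using kp by (simp add: field_simps)
    have ppv': "pp (\<phi> (t, y, r)) = (prb P {w. R w = r \<and> w \<in> W \<and> Y w = y} / prb P W) / real k"
      unfolding ppv by simp
    have hlp: "\<bar>a - b\<bar> = real k * \<bar>a / real k - b / real k\<bar>" for a b :: real
    proof -
      have "a / real k - b / real k = (a - b) / real k" by (simp add: diff_divide_distrib)
      thus ?thesis using kp by (simp add: abs_divide)
    qed
    show ?thesis unfolding ppv' qqv' by (rule hlp)
  qed
  have "(\<Sum>t<k. \<Sum>y\<in>Ys. \<Sum>r\<in>Rs.
     \<bar>prb P {w. R w = r \<and> w \<in> W \<and> Y w = y} / prb P W
      - prb P {w. Y w = y} / prb P {w. omit t (Y w) = omit t y} * (prb P {w. R w = r \<and> w \<in> W \<and> omit t (Y w) = omit t y} / prb P W)\<bar>)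
     = (\<Sum>t<k. \<Sum>y\<in>Ys. \<Sum>r\<in>Rs. real k * \<bar>pp (\<phi> (t, y, r)) - qq (\<phi> (t, y, r))\<bar>)"
    using ident by (intro sum.cong refl) auto
  also have "\<dots> = real k * (\<Sum>x\<in>{0..<k} \<times> (Ys \<times> Rs). \<bar>pp (\<phi> x) - qq (\<phi> x)\<bar>)"
    by (simp add: sum_distrib_left sum.cartesian_product' atLeast0LessThan)
  also have "\<dots> \<le> real k * sqrt (2 * K)"
    using E_sum PIN' by (intro mult_left_mono) auto
  finally show ?thesis by (simp add: K_def Ys_def Rs_def Y_def R_def)
qed

end


lemma sum_sqrt_le:
  fixes a :: "nat \<Rightarrow> real"
  assumes "\<And>i. i \<in> I \<Longrightarrow> a i \<ge> 0" "finite I"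
  shows "(\<Sum>i\<in>I. sqrt (a i)) \<le> sqrt (real (card I) * (\<Sum>i\<in>I. a i))"
proof (rule real_le_rsqrt)
  have "(\<Sum>i\<in>I. 1 * sqrt (a i))^2 \<le> (\<Sum>i\<in>I. 1^2) * (\<Sum>i\<in>I. (sqrt (a i))^2)"
    by (rule Cauchy_Schwarz_ineq_sum)
  also have "(\<Sum>i\<in>I. (sqrt (a i))^2) = (\<Sum>i\<in>I. a i)" using assms by (intro sum.cong) auto
  finally show "(\<Sum>i\<in>I. sqrt (a i))^2 \<le> real (card I) * (\<Sum>i\<in>I. a i)" by simp
qed

context cor begin

lemma As_ne: "t < k \<Longrightarrow> As t \<noteq> {}"
proof -
  assume t: "t < k"
  obtain x where x: "x \<in> set_pmf mu" using set_pmf_not_empty[of mu] by blast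
  hence xt: "x ! t \<in> Xs t" using mu_supp t by auto
  let ?qs = "replicate n (x ! t)"
  have "set ?qs \<subseteq> Xs t" using xt by (cases n) auto
  hence "length (f t ?qs) = n \<and> set (f t ?qs) \<subseteq> As t" using strat t unfolding strategy_def by auto
  moreover have "n > 0" using mn by simp
  ultimately have "f t ?qs ! 0 \<in> As t" by (auto dest!: nth_mem)
  thus ?thesis by auto
qed

lemma prodcard_pos: "(\<Prod>t<k. card (As t)) \<ge> 1"
proof -
  have "card (As t) \<ge> 1" if "t < k" for t
    using As_ne[OF that] finAs[OF that] by (simp add: Suc_le_eq card_gt_0_iff)
  hence "(\<Prod>t<k. card (As t)) \<ge> (\<Prod>t<k. (1::nat))" by (intro prod_mono) auto
  thus ?thesis by simp
qed

lemma Nz_ge1: "Nz \<ge> 1"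
proof -
  have h: "(1::nat) \<le> (\<Prod>t<k. card (As t)) ^ (n - m)" by (rule one_le_power[OF prodcard_pos])
  have "real (1::nat) \<le> real ((\<Prod>t<k. card (As t)) ^ (n - m))" using h by (simp only: of_nat_le_iff)
  thus ?thesis unfolding Nz_def by simp
qed

lemma pW_le1: "prb P W \<le> 1" by simp

lemma main:
  "(\<Sum>i<m. \<Sum>t<k.
        tvd (PYcond P (\<lambda>\<omega>. Yv k Xb (fst \<omega>) i)
               (\<lambda>\<omega>. (Zv k m n f (fst \<omega>), Om_minus k m n Xb (fst \<omega>) (snd \<omega>) i)) W id)
            (PYcond P (\<lambda>\<omega>. Yv k Xb (fst \<omega>) i)
               (\<lambda>\<omega>. (Zv k m n f (fst \<omega>), Om_minus k m n Xb (fst \<omega>) (snd \<omega>) i)) W (omit t))) / real m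
     \<le> 3 * real k * sqrt ((real (n - m) * log 2 (real (\<Prod>t<k. card (As t)))
                           + log 2 (1 / prb P W)) / real m)"
proof -
  define pw where "pw = prb P W"
  have pwp: "pw > 0" using pW by (simp add: pw_def)
  define \<Lambda> where "\<Lambda> = ln (Nz / pw)"
  define L where "L i = (\<Sum>w\<in>S. qW P W w * ln (Qev P W {w'. Yi i w' = Yi i w} / prb P {w'. Yi i w' = Yi i w}))" for i
  define K where "K i = (\<Sum>w\<in>S. qW P W w * ln (Qev P W {w'. Yi i w' = Yi i w \<and> Gf w' = Gf w \<and> Zf w' = Zf w}
          / (prb P {w'. Yi i w' = Yi i w \<and> Oi i w' = Oi i w} / prb P {w'. Oi i w' = Oi i w} * Qev P W {w'. Gf w' = Gf w \<and> Zf w' = Zf w})))" for i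
  define l where "l i = (\<Sum>y\<in>(\<lambda>w. Yi i w) ` S. \<bar>prb P {w. Yi i w = y} - prb P {w. w \<in> W \<and> Yi i w = y} / prb P W\<bar>)" for i
  define M where "M i t = (\<Sum>y\<in>(\<lambda>w. Yi i w) ` S. \<Sum>r\<in>(\<lambda>w. Ri i w) ` S.
     \<bar>prb P {w. Ri i w = r \<and> w \<in> W \<and> Yi i w = y} / prb P W
      - prb P {w. Yi i w = y} / prb P {w. omit t (Yi i w) = omit t y} * (prb P {w. Ri i w = r \<and> w \<in> W \<and> omit t (Yi i w) = omit t y} / prb P W)\<bar>)" for i t
  define tv where "tv i t = tvd (PYcond P (\<lambda>\<omega>. Yv k Xb (fst \<omega>) i)
               (\<lambda>\<omega>. (Zv k m n f (fst \<omega>), Om_minus k m n Xb (fst \<omega>) (snd \<omega>) i)) W id)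
            (PYcond P (\<lambda>\<omega>. Yv k Xb (fst \<omega>) i)
               (\<lambda>\<omega>. (Zv k m n f (fst \<omega>), Om_minus k m n Xb (fst \<omega>) (snd \<omega>) i)) W (omit t))" for i t
  have kp: "real k > 0" using k1 by simp
  have mp: "real m > 0" using m1 by simp
  have split: "2 * tv i t \<le> 2 * l i + M i t" for i t
    unfolding tv_def l_def M_def by (rule tv_split[OF finP pW])
  have lL: "l i \<le> sqrt (2 * L i)" for i
    unfolding l_def L_def by (rule real_le_rsqrt) (rule pinsker_Y[OF finP pW])
  have L0: "L i \<ge> 0" for i
  proof -
    have "(l i)^2 \<le> 2 * L i" unfolding l_def L_def by (rule pinsker_Y[OF finP pW])
    moreover have "(l i)^2 \<ge> 0" by simp
    ultimately show ?thesis by linarith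
  qed
  have MK: "(\<Sum>t<k. M i t) \<le> real k * sqrt (2 * K i)" if "i < m" for i
    unfolding M_def K_def by (rule mid_bound[OF that])
  have M0: "M i t \<ge> 0" for i t unfolding M_def by (intro sum_nonneg) auto
  have K0: "K i \<ge> 0" if "i < m" for i
  proof -
    have "0 \<le> (\<Sum>t<k. M i t)" using M0 by (intro sum_nonneg) auto
    hence "0 \<le> real k * sqrt (2 * K i)" using MK[OF that] by linarith
    hence "0 \<le> sqrt (2 * K i)" using kp by (simp add: zero_le_mult_iff)
    thus ?thesis by simp
  qed
  have sumL: "(\<Sum>i<m. L i) \<le> \<Lambda>"
  proof -
    have "(\<Sum>i<m. L i) \<le> ln (1 / prb P W)" using razL by (simp add: L_def atLeast0LessThan)
    also have "\<dots> \<le> \<Lambda>" unfolding \<Lambda>_def pw_def using pwp Nz_ge1 pw_def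
      by (subst ln_le_cancel_iff) (auto intro!: divide_right_mono)
    finally show ?thesis .
  qed
  have sumK: "(\<Sum>i<m. K i) \<le> \<Lambda>"
    using razK by (simp add: K_def atLeast0LessThan \<Lambda>_def pw_def)
  have Lam0: "\<Lambda> \<ge> 0"
  proof -
    have "pw \<le> 1" by (simp add: pw_def)
    hence "Nz / pw \<ge> 1" using Nz_ge1 pwp by (simp add: le_divide_eq_1)
    thus ?thesis by (simp add: \<Lambda>_def)
  qed
  have per_i: "(\<Sum>t<k. tv i t) \<le> real k * sqrt (2 * L i) + real k / 2 * sqrt (2 * K i)" if i: "i < m" for i
  proof -
    have "2 * (\<Sum>t<k. tv i t) = (\<Sum>t<k. 2 * tv i t)" by (simp add: sum_distrib_left)
    also have "\<dots> \<le> (\<Sum>t<k. 2 * l i + M i t)" by (intro sum_mono split)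
    also have "\<dots> = real k * (2 * l i) + (\<Sum>t<k. M i t)" by (simp add: sum.distrib)
    also have "\<dots> \<le> real k * (2 * sqrt (2 * L i)) + real k * sqrt (2 * K i)"
      using lL[of i] MK[OF i] kp by (intro add_mono mult_left_mono) auto
    finally show ?thesis by simp
  qed
  have "(\<Sum>i<m. \<Sum>t<k. tv i t) \<le> (\<Sum>i<m. real k * sqrt (2 * L i) + real k / 2 * sqrt (2 * K i))"
    by (intro sum_mono per_i) auto
  also have "\<dots> = real k * (\<Sum>i<m. sqrt (2 * L i)) + real k / 2 * (\<Sum>i<m. sqrt (2 * K i))"
    by (simp add: sum.distrib sum_distrib_left)
  also have "\<dots> \<le> real k * sqrt (real m * (2 * \<Lambda>)) + real k / 2 * sqrt (real m * (2 * \<Lambda>))"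
  proof (intro add_mono mult_left_mono)
    have "(\<Sum>i<m. sqrt (2 * L i)) \<le> sqrt (real (card {..<m}) * (\<Sum>i<m. 2 * L i))"
      using L0 by (intro sum_sqrt_le) auto
    also have "\<dots> \<le> sqrt (real m * (2 * \<Lambda>))"
      using sumL mp by (auto simp: sum_distrib_left[symmetric] intro!: real_sqrt_le_mono mult_left_mono)
    finally show "(\<Sum>i<m. sqrt (2 * L i)) \<le> sqrt (real m * (2 * \<Lambda>))" .
    have "(\<Sum>i<m. sqrt (2 * K i)) \<le> sqrt (real (card {..<m}) * (\<Sum>i<m. 2 * K i))"
      using K0 by (intro sum_sqrt_le) auto
    also have "\<dots> \<le> sqrt (real m * (2 * \<Lambda>))"
      using sumK mp by (auto simp: sum_distrib_left[symmetric] intro!: real_sqrt_le_mono mult_left_mono)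
    finally show "(\<Sum>i<m. sqrt (2 * K i)) \<le> sqrt (real m * (2 * \<Lambda>))" .
  qed (use kp in auto)
  also have "\<dots> = 3 / 2 * real k * sqrt (real m * (2 * \<Lambda>))" by (simp add: algebra_simps)
  finally have tot: "(\<Sum>i<m. \<Sum>t<k. tv i t) \<le> 3 / 2 * real k * sqrt (real m * (2 * \<Lambda>))" .
  have sq: "sqrt (real m * (2 * \<Lambda>)) / real m = sqrt (2 * \<Lambda> / real m)"
  proof -
    have "real m = sqrt (real m ^ 2)" using mp by simp
    hence "sqrt (real m * (2 * \<Lambda>)) / real m = sqrt (real m * (2 * \<Lambda>)) / sqrt (real m ^ 2)" by simp
    also have "\<dots> = sqrt (real m * (2 * \<Lambda>) / real m ^ 2)" by (simp add: real_sqrt_divide)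
    also have "real m * (2 * \<Lambda>) / real m ^ 2 = 2 * \<Lambda> / real m" using mp by (simp add: power2_eq_square field_simps)
    finally show ?thesis .
  qed
  have "(\<Sum>i<m. \<Sum>t<k. tv i t) / real m \<le> 3 / 2 * real k * sqrt (real m * (2 * \<Lambda>)) / real m"
    using divide_right_mono[OF tot, of "real m"] mp by simp
  also have "\<dots> = 3 / 2 * real k * sqrt (2 * \<Lambda> / real m)" unfolding sq[symmetric] by (simp only: times_divide_eq_right)
  also have "\<dots> = 3 * real k * sqrt (\<Lambda> / (2 * real m))"
  proof -
    have "sqrt (2 * \<Lambda> / real m) = 2 * sqrt (\<Lambda> / (2 * real m))"
    proof -
      have e: "2 * \<Lambda> / real m = 4 * (\<Lambda> / (2 * real m))" using mp by (simp add: field_simps)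
      have "sqrt (2 * \<Lambda> / real m) = sqrt (4 * (\<Lambda> / (2 * real m)))" by (simp only: e)
      also have "\<dots> = sqrt 4 * sqrt (\<Lambda> / (2 * real m))" by (rule real_sqrt_mult)
      also have "sqrt 4 = (2::real)" by (simp add: real_sqrt_eq_iff)
      finally show ?thesis .
    qed
    thus ?thesis by simp
  qed
  also have "\<dots> \<le> 3 * real k * sqrt ((real (n - m) * log 2 (real (\<Prod>t<k. card (As t))) + log 2 (1 / prb P W)) / real m)"
  proof -
    have pc0: "0 < (\<Prod>t<k. card (As t))" using prodcard_pos by linarith
    have pc: "real (\<Prod>t<k. card (As t)) > 0" using pc0 by (simp only: of_nat_0_less_iff)
    have "real (n - m) * log 2 (real (\<Prod>t<k. card (As t))) + log 2 (1 / prb P W) = log 2 Nz + log 2 (1 / pw)"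
      unfolding Nz_def pw_def using pc by (simp add: log_nat_power)
    also have "\<dots> = log 2 (Nz / pw)"
    proof -
      have a: "log 2 (1 / pw) = log 2 1 - log 2 pw" by (rule log_divide_pos) (use pwp in auto)
      have b: "log 2 (Nz / pw) = log 2 Nz - log 2 pw" by (rule log_divide_pos) (use Nz_ge1 pwp in auto)
      show ?thesis using a b by simp
    qed
    also have "\<dots> = \<Lambda> / ln 2" by (simp add: log_def \<Lambda>_def)
    finally have eq: "real (n - m) * log 2 (real (\<Prod>t<k. card (As t))) + log 2 (1 / prb P W) = \<Lambda> / ln 2" .
    have l2: "ln (2::real) \<le> 2" using ln_le_minus_one[of 2] by simp
    have l2p: "ln (2::real) > 0" by simp
    have "\<Lambda> / (2 * real m) \<le> (\<Lambda> / ln 2) / real m"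
    proof -
      have "\<Lambda> / 2 \<le> \<Lambda> / ln 2" using Lam0 l2 l2p by (intro divide_left_mono) auto
      thus ?thesis using mp by (simp add: divide_right_mono field_simps)
    qed
    hence "sqrt (\<Lambda> / (2 * real m)) \<le> sqrt ((\<Lambda> / ln 2) / real m)" by (rule real_sqrt_le_mono)
    thus ?thesis unfolding eq using kp by (intro mult_left_mono) auto
  qed
  finally show ?thesis by (simp add: tv_def)
qed

end

theorem corollary4p4:
  fixes k n m :: nat
    and Xs :: "nat \<Rightarrow> 'q set" and As :: "nat \<Rightarrow> 'a set"
    and mu :: "'q list pmf" and V :: "'q list \<Rightarrow> 'a list \<Rightarrow> bool"
    and \<alpha> :: real and Xb :: "nat \<Rightarrow> 'q set"
    and f :: "nat \<Rightarrow> 'q list \<Rightarrow> 'a list"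
  assumes "game k Xs As mu"
    and "\<alpha> > 0" and "anchored k Xs mu \<alpha> Xb"
    and "1 \<le> m" and "m < n"
    and "strategy k n Xs As f"
    and "prb (sample k n m mu) (Wev k m n f V) > 0"
  shows
    "(\<Sum>i<m. \<Sum>t<k.
        tvd (PYcond (sample k n m mu) (\<lambda>\<omega>. Yv k Xb (fst \<omega>) i)
               (\<lambda>\<omega>. (Zv k m n f (fst \<omega>), Om_minus k m n Xb (fst \<omega>) (snd \<omega>) i))
               (Wev k m n f V) id)
            (PYcond (sample k n m mu) (\<lambda>\<omega>. Yv k Xb (fst \<omega>) i)
               (\<lambda>\<omega>. (Zv k m n f (fst \<omega>), Om_minus k m n Xb (fst \<omega>) (snd \<omega>) i))
               (Wev k m n f V) (omit t))) / real m
     \<le> 3 * real k * sqrt ((real (n - m) * log 2 (real (\<Prod>t<k. card (As t)))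
                           + log 2 (1 / prb (sample k n m mu) (Wev k m n f V))) / real m)"
  proof (cases "k = 0")
  case True
  thus ?thesis by simp
next
  case False
  interpret cor k n m Xs As mu V Xb f
    using assms False by unfold_locales auto
  show ?thesis by (rule main)
qed

end
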